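(* Under the Setup and the Unconditional asymptotic regime described in the context, $$\lim_{p\to\infty}\mathrm{Var}_{\boldsymbol\mu,S_n}(\hat\varepsilon^B)=\lim_{p\to\infty}\mathrm{Var}_{\boldsymbol\mu,S_n}(\varepsilon)=\lim_{p\to\infty}\mathrm{Cov}_{\boldsymbol\mu,S_n}(\varepsilon,\hat\varepsilon^B)=\lim_{p\to\infty}\mathrm{Var}_{\boldsymbol\mu,S_n}(\hat\varepsilon^B-\varepsilon)=0,$$ $\lim_{p\to\infty}\big|E_{\boldsymbol\mu,S_n}[\hat\varepsilon^B-\varepsilon]\big|=0$, and $$\lim_{p\to\infty}\mathrm{RMS}_{\boldsymbol\mu,S_n}[\hat\varepsilon^B]=\lim_{p\to\infty}\sqrt{E_{\boldsymbol\mu,S_n}[(\varepsilon-\hat\varepsilon^B)^2]}=0 .$$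
   Context: Setup. Fix $\alpha_0\in(0,1)$, $\alpha_1=1-\alpha_0$, and $c=\log\frac{1-\alpha_0}{\alpha_0}$. $\Phi$ is the standard normal CDF. For each dimension $p$ there is a known symmetric positive definite $p\times p$ matrix $\Sigma$, sample sizes $n_0,n_1$, prior means $\mathbf m_0,\mathbf m_1\in\mathbb R^p$ and prior certainty parameters $\nu_0,\nu_1>0$ (all depending on $p$; the index $p$ is suppressed). The class means are random: $\boldsymbol\mu_i\sim N(\mathbf m_i,\Sigma/\nu_i)$, $i=0,1$, independent; $\boldsymbol\mu=(\boldsymbol\mu_0,\boldsymbol\mu_1)$. Given $\boldsymbol\mu$, class $i$ has distribution $\Pi_i=N(\boldsymbol\mu_i,\Sigma)$, and the sample $S_n$ consists of $n_0$ i.i.d. points from $\Pi_0$ and, independently, $n_1$ i.i.d. points from $\Pi_1$; $\bar{\mathbf x}_0,\bar{\mathbf x}_1$ are the class sample means. The LDA classifier assigns $\mathbf x$ to class 1 if $W(\mathbf x)\le c$ and to class 0 otherwise, where $W(\mathbf x)=(\mathbf x-\frac{\bar{\mathbf x}_0+\bar{\mathbf x}_1}{2})^T\Sigma^{-1}(\bar{\mathbf x}_0-\bar{\mathbf x}_1)$. Let $\hat\delta^2=(\bar{\mathbf x}_0-\bar{\mathbf x}_1)^T\Sigma^{-1}(\bar{\mathbf x}_0-\bar{\mathbf x}_1)$. The true error is $\varepsilon=\alpha_0\varepsilon_0+\alpha_1\varepsilon_1$ with $\varepsilon_i=\Phi\Big(\frac{(-1)^{i+1}(\boldsymbol\mu_i-\frac{\bar{\mathbf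 x}_0+\bar{\mathbf x}_1}{2})^T\Sigma^{-1}(\bar{\mathbf x}_0-\bar{\mathbf x}_1)+(-1)^i c}{\hat\delta}\Big)$. The Bayesian MMSE error estimator is $\hat\varepsilon^B=\alpha_0\hat\varepsilon^B_0+\alpha_1\hat\varepsilon^B_1$ with $\hat\varepsilon_i^B=\Phi\Big((-1)^i\frac{-(\mathbf m_i^*-\frac{\bar{\mathbf x}_0+\bar{\mathbf x}_1}{2})^T\Sigma^{-1}(\bar{\mathbf x}_0-\bar{\mathbf x}_1)+c}{\hat\delta}\sqrt{\frac{\nu_i^*}{\nu_i^*+1}}\Big)$, where $\mathbf m_i^*=\frac{n_i\bar{\mathbf x}_i+\nu_i\mathbf m_i}{n_i+\nu_i}$ and $\nu_i^*=n_i+\nu_i$. Notation: $\Delta^2_{\mathbf m}=(\mathbf m_0-\mathbf m_1)^T\Sigma^{-1}(\mathbf m_0-\mathbf m_1)$, and $\bar\Delta^2_{\mathbf m}$ its limit as $p\to\infty$. Unconditional asymptotic regime. Expectations $E_{\boldsymbol\mu,S_n}$ are over both $\boldsymbol\mu$ and the sample. As $p\to\infty$: $n_0,n_1,\nu_0,\nu_1\to\infty$, $p/n_i\to J_i\in[0,\infty)$, $\nu_i/n_i\to\gamma_i\in(0,\infty)$, and for all $i,j\in\{0,1\}$, $\mathbf m_i^T\Sigma^{-1}\mathbf m_j$ converges to a finite limit. It is assumed that $F=\bar\Delta^2_{\mathbf m}+J_0+J_1+\frac{J_0}{\gamma_0}+\frac{J_1}{\gamma_1}>0$. $\lim_{p\to\infty}$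 denotes the limit along this regime. *)

theory Defs
  imports "HOL-Probability.Probability"
begin

text \<open>Vectors in R^p are represented as functions nat => real, only the
coordinates k < p being relevant; p x p matrices as nat => nat => real.\<close>

definition qf :: "nat \<Rightarrow> (nat \<Rightarrow> nat \<Rightarrow> real) \<Rightarrow> (nat \<Rightarrow> real) \<Rightarrow> (nat \<Rightarrow> real) \<Rightarrow> real" where
  "qf p A x y = (\<Sum>k<p. \<Sum>l<p. x k * A k l * y l)"

definition Phi :: "real \<Rightarrow> real" where
  "Phi x = measure (density lborel std_normal_density) {..x}"

text \<open>Multivariate normal N(m,S) on R^p (Cramer-Wold definition): the random
vector is measurable and every nontrivial linear combination is univariate
normal with mean a^T m and variance a^T S a.\<close>
definition mvn :: "'a measure \<Rightarrow> nat \<Rightarrow> ('a \<Rightarrow> nat \<Rightarrow> real) \<Rightarrow> (nat \<Rightarrow> real)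
    \<Rightarrow> (nat \<Rightarrow> nat \<Rightarrow> real) \<Rightarrow> bool" where
  "mvn M p Y m S \<longleftrightarrow> Y \<in> measurable M (PiM {..<p} (\<lambda>_. borel)) \<and>
     (\<forall>a. (\<exists>k<p. a k \<noteq> 0) \<longrightarrow>
        distributed M lborel (\<lambda>\<omega>. \<Sum>k<p. a k * Y \<omega> k)
          (normal_density (\<Sum>k<p. a k * m k) (sqrt (qf p S a a))))"

text \<open>Index type for the independent random vectors of the model:
the class means mu_i and the noises x_ij - mu_i.\<close>
datatype rvidx = MuI nat | NoiseI nat nat

definition smean :: "nat \<Rightarrow> (nat \<Rightarrow> nat \<Rightarrow> real) \<Rightarrow> nat \<Rightarrow> real" where
  "smean n X = (\<lambda>k. (\<Sum>j<n. X j k) / real n)"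

definition true_err_i :: "nat \<Rightarrow> (nat \<Rightarrow> nat \<Rightarrow> real) \<Rightarrow> real \<Rightarrow> nat
    \<Rightarrow> (nat \<Rightarrow> real) \<Rightarrow> (nat \<Rightarrow> real) \<Rightarrow> (nat \<Rightarrow> real) \<Rightarrow> real" where
  "true_err_i p Sinv c i mu x0 x1 =
     Phi (((-1) ^ (i + 1) * qf p Sinv (\<lambda>k. mu k - (x0 k + x1 k) / 2) (\<lambda>k. x0 k - x1 k)
           + (-1) ^ i * c) / sqrt (qf p Sinv (\<lambda>k. x0 k - x1 k) (\<lambda>k. x0 k - x1 k)))"

definition true_err :: "nat \<Rightarrow> (nat \<Rightarrow> nat \<Rightarrow> real) \<Rightarrow> real \<Rightarrow> (nat \<Rightarrow> real) \<Rightarrow> (nat \<Rightarrow> real)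
    \<Rightarrow> (nat \<Rightarrow> real) \<Rightarrow> (nat \<Rightarrow> real) \<Rightarrow> real" where
  "true_err p Sinv a0 mu0 mu1 x0 x1 =
     (let c = ln ((1 - a0) / a0) in
      a0 * true_err_i p Sinv c 0 mu0 x0 x1 + (1 - a0) * true_err_i p Sinv c 1 mu1 x0 x1)"

text \<open>Bayesian MMSE class-i error estimator; xi is the class-i sample mean,
n the class-i sample size, nu and m the class-i prior parameters.\<close>
definition bee_i :: "nat \<Rightarrow> (nat \<Rightarrow> nat \<Rightarrow> real) \<Rightarrow> real \<Rightarrow> nat \<Rightarrow> nat \<Rightarrow> real
    \<Rightarrow> (nat \<Rightarrow> real) \<Rightarrow> (nat \<Rightarrow> real) \<Rightarrow> (nat \<Rightarrow> real) \<Rightarrow> (nat \<Rightarrow> real) \<Rightarrow> real" where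
  "bee_i p Sinv c i n nu m xi x0 x1 =
     (let mstar = (\<lambda>k. (real n * xi k + nu * m k) / (real n + nu));
          nustar = real n + nu
      in Phi ((-1) ^ i *
           ((- qf p Sinv (\<lambda>k. mstar k - (x0 k + x1 k) / 2) (\<lambda>k. x0 k - x1 k) + c)
             / sqrt (qf p Sinv (\<lambda>k. x0 k - x1 k) (\<lambda>k. x0 k - x1 k)))
           * sqrt (nustar / (nustar + 1))))"

definition bee :: "nat \<Rightarrow> (nat \<Rightarrow> nat \<Rightarrow> real) \<Rightarrow> real \<Rightarrow> nat \<Rightarrow> nat \<Rightarrow> real \<Rightarrow> real
    \<Rightarrow> (nat \<Rightarrow> real) \<Rightarrow> (nat \<Rightarrow> real) \<Rightarrow> (nat \<Rightarrow> real) \<Rightarrow> (nat \<Rightarrow> real) \<Rightarrow> real" where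
  "bee p Sinv a0 n0 n1 nu0 nu1 m0 m1 x0 x1 =
     (let c = ln ((1 - a0) / a0) in
      a0 * bee_i p Sinv c 0 n0 nu0 m0 x0 x0 x1 + (1 - a0) * bee_i p Sinv c 1 n1 nu1 m1 x1 x0 x1)"

definition covariance :: "'a measure \<Rightarrow> ('a \<Rightarrow> real) \<Rightarrow> ('a \<Rightarrow> real) \<Rightarrow> real" where
  "covariance M X Y = integral\<^sup>L M (\<lambda>\<omega>. (X \<omega> - integral\<^sup>L M X) * (Y \<omega> - integral\<^sup>L M Y))"

end

theory Submission
  imports Defs
begin


lemma qf_add_left: "qf P A (\<lambda>k. x k + y k) z = qf P A x z + qf P A y z"
  by (simp add: qf_def algebra_simps sum.distrib)
lemma qf_add_right: "qf P A z (\<lambda>k. x k + y k) = qf P A z x + qf P A z y"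
  by (simp add: qf_def algebra_simps sum.distrib)
lemma qf_diff_left: "qf P A (\<lambda>k. x k - y k) z = qf P A x z - qf P A y z"
  by (simp add: qf_def algebra_simps sum_subtractf)
lemma qf_diff_right: "qf P A z (\<lambda>k. x k - y k) = qf P A z x - qf P A z y"
  by (simp add: qf_def algebra_simps sum_subtractf)
lemma qf_scale_left: "qf P A (\<lambda>k. c * x k) z = c * qf P A x z"
  by (simp add: qf_def sum_distrib_left algebra_simps)
lemma qf_scale_right: "qf P A z (\<lambda>k. c * x k) = c * qf P A z x"
  by (simp add: qf_def sum_distrib_left algebra_simps)
lemma qf_cong: "(\<And>k. k < P \<Longrightarrow> x k = x' k) \<Longrightarrow> (\<And>k. k < P \<Longrightarrow> y k = y' k) \<Longrightarrow> qf P A x y = qf P A x' y'"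
  by (simp add: qf_def)
lemma qf_sym: "(\<And>k l. k < P \<Longrightarrow> l < P \<Longrightarrow> A k l = A l k) \<Longrightarrow> qf P A x y = qf P A y x"
  unfolding qf_def by (subst sum.swap) (auto intro!: sum.cong simp: mult.commute)
lemma qf_zero_left: "(\<And>k. k < P \<Longrightarrow> x k = 0) \<Longrightarrow> qf P A x y = 0"
  by (simp add: qf_def)

definition lin :: "nat \<Rightarrow> (nat \<Rightarrow> real) \<Rightarrow> (nat \<Rightarrow> real) \<Rightarrow> real" where
  "lin P b y = (\<Sum>k<P. b k * y k)"

lemma lin_add: "lin P (\<lambda>k. x k + y k) v = lin P x v + lin P y v"
  by (simp add: lin_def algebra_simps sum.distrib)
lemma lin_diff: "lin P (\<lambda>k. x k - y k) v = lin P x v - lin P y v"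
  by (simp add: lin_def algebra_simps sum_subtractf)

lemma polar4: "(x1::real) * x2 * x3 * x4 = ((x1+x2+x3+x4)^4 - (x1+x2+x3-x4)^4 - (x1+x2-x3+x4)^4 + (x1+x2-x3-x4)^4
   - (x1-x2+x3+x4)^4 + (x1-x2+x3-x4)^4 + (x1-x2-x3+x4)^4 - (x1-x2-x3-x4)^4) / 192"
  by (simp add: field_simps power_def)

lemma polar2: "(x1::real) * x2 = ((x1+x2)^2 - (x1-x2)^2) / 4"
  by (simp add: field_simps power2_eq_square)

lemma isserlis_alg:
  fixes c11 c22 c33 c44 c12 c13 c14 c23 c24 c34 :: real
  defines "q \<equiv> \<lambda>e2 e3 e4. c11 + c22 + c33 + c44 + 2*e2*c12 + 2*e3*c13 + 2*e4*c14 + 2*e2*e3*c23 + 2*e2*e4*c24 + 2*e3*e4*c34"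
  shows "(3 * (q 1 1 1)^2 - 3 * (q 1 1 (-1))^2 - 3 * (q 1 (-1) 1)^2 + 3 * (q 1 (-1) (-1))^2
   - 3 * (q (-1) 1 1)^2 + 3 * (q (-1) 1 (-1))^2 + 3 * (q (-1) (-1) 1)^2 - 3 * (q (-1) (-1) (-1))^2) / 192
   = c12 * c34 + c13 * c24 + c14 * c23"
  unfolding q_def by (simp add: field_simps power2_eq_square)


lemma (in prob_space) normal_mom:
  assumes D: "distributed M lborel X (normal_density 0 \<sigma>)" and s: "0 < \<sigma>"
  shows "integrable M (\<lambda>x. X x ^ k)"
    and "expectation (\<lambda>x. X x ^ (2*k)) = fact (2*k) / ((2/\<sigma>\<^sup>2)^k * fact k)"
proof -
  have "integrable lborel (\<lambda>x. normal_density 0 \<sigma> x * x ^ k)"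
    using integrable_normal_moment[OF s, of 0 k] by simp
  then show "integrable M (\<lambda>x. X x ^ k)"
    using distributed_integrable[OF D, of "\<lambda>x. x ^ k"] by simp
  show "expectation (\<lambda>x. X x ^ (2*k)) = fact (2*k) / ((2/\<sigma>\<^sup>2)^k * fact k)"
    using integral_normal_moment_even[OF s, of 0 k] distributed_integral[OF D, of "\<lambda>x. x ^ (2*k)"]
    by simp
qed

locale gvec = prob_space M for M :: "'a measure" +
  fixes P :: nat and Y :: "'a \<Rightarrow> nat \<Rightarrow> real" and C :: "nat \<Rightarrow> nat \<Rightarrow> real"
  assumes mvn: "mvn M P Y (\<lambda>_. 0) C"
  and Csym: "\<And>k l. k < P \<Longrightarrow> l < P \<Longrightarrow> C k l = C l k"
  and Cpd: "\<And>b. (\<exists>k<P. b k \<noteq> 0) \<Longrightarrow> qf P C b b > 0"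
begin

lemma Ymeas: "Y \<in> measurable M (PiM {..<P} (\<lambda>_. borel))"
  using mvn by (simp add: mvn_def)

lemma Ycomp[measurable]: "k < P \<Longrightarrow> (\<lambda>\<omega>. Y \<omega> k) \<in> borel_measurable M"
  using measurable_compose[OF Ymeas measurable_component_singleton[of k "{..<P}" "\<lambda>_. borel"]] by simp

lemma lin_meas[measurable]: "(\<lambda>\<omega>. lin P b (Y \<omega>)) \<in> borel_measurable M"
  unfolding lin_def by measurable

lemma lin_dist: "(\<exists>k<P. b k \<noteq> 0) \<Longrightarrow>
   distributed M lborel (\<lambda>\<omega>. lin P b (Y \<omega>)) (normal_density 0 (sqrt (qf P C b b)))"
  using mvn unfolding mvn_def lin_def by simp

lemma lin_zero: "\<forall>k<P. b k = 0 \<Longrightarrow> lin P b (Y \<omega>) = 0 \<and> qf P C b b = 0"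
  by (simp add: lin_def qf_def)

lemma lin_pow_int: "integrable M (\<lambda>\<omega>. lin P b (Y \<omega>) ^ k)"
proof (cases "\<exists>k<P. b k \<noteq> 0")
  case True
  then show ?thesis using normal_mom(1)[OF lin_dist[OF True]] Cpd[OF True] by simp
next
  case False
  then show ?thesis using lin_zero[of b] by simp
qed

lemma lin_E2: "expectation (\<lambda>\<omega>. lin P b (Y \<omega>) ^ 2) = qf P C b b"
proof (cases "\<exists>k<P. b k \<noteq> 0")
  case True
  have "expectation (\<lambda>\<omega>. lin P b (Y \<omega>) ^ (2*1)) = fact 2 / ((2/(sqrt (qf P C b b))\<^sup>2)^1 * fact 1)"
    using normal_mom(2)[OF lin_dist[OF True], of 1] Cpd[OF True] by simp
  then show ?thesis using Cpd[OF True] by simp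
next
  case False
  then show ?thesis using lin_zero[of b] by simp
qed

lemma lin_E4: "expectation (\<lambda>\<omega>. lin P b (Y \<omega>) ^ 4) = 3 * (qf P C b b)^2"
proof (cases "\<exists>k<P. b k \<noteq> 0")
  case True
  have "expectation (\<lambda>\<omega>. lin P b (Y \<omega>) ^ (2*2)) = fact 4 / ((2/(sqrt (qf P C b b))\<^sup>2)^2 * fact 2)"
    using normal_mom(2)[OF lin_dist[OF True], of 2] Cpd[OF True] by (simp add: numeral_eq_Suc)
  then show ?thesis using Cpd[OF True] by (simp add: fact_numeral power2_eq_square field_simps)
next
  case False
  then show ?thesis using lin_zero[of b] by simp
qed

lemma qf_combo:
  "qf P C (\<lambda>k. b1 k + e2 * b2 k + e3 * b3 k + e4 * b4 k) (\<lambda>k. b1 k + e2 * b2 k + e3 * b3 k + e4 * b4 k)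
   = qf P C b1 b1 + e2*e2*qf P C b2 b2 + e3*e3*qf P C b3 b3 + e4*e4*qf P C b4 b4
     + 2*e2*qf P C b1 b2 + 2*e3*qf P C b1 b3 + 2*e4*qf P C b1 b4
     + 2*e2*e3*qf P C b2 b3 + 2*e2*e4*qf P C b2 b4 + 2*e3*e4*qf P C b3 b4"
proof -
  have s: "\<And>x y. qf P C x y = qf P C y x" by (rule qf_sym) (simp add: Csym)
  show ?thesis
    by (simp add: qf_add_left qf_add_right qf_scale_left qf_scale_right s[of b2 b1] s[of b3 b1] s[of b4 b1]
       s[of b3 b2] s[of b4 b2] s[of b4 b3] algebra_simps)
qed

lemma lin_combo: "lin P (\<lambda>k. b1 k + e2 * b2 k + e3 * b3 k + e4 * b4 k) y
   = lin P b1 y + e2 * lin P b2 y + e3 * lin P b3 y + e4 * lin P b4 y"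
  by (simp add: lin_def sum.distrib sum_distrib_left algebra_simps)

lemma isserlis:
  defines "L \<equiv> \<lambda>b \<omega>. lin P b (Y \<omega>)"
  shows "integrable M (\<lambda>\<omega>. L b1 \<omega> * L b2 \<omega> * L b3 \<omega> * L b4 \<omega>)"
    and "expectation (\<lambda>\<omega>. L b1 \<omega> * L b2 \<omega> * L b3 \<omega> * L b4 \<omega>)
       = qf P C b1 b2 * qf P C b3 b4 + qf P C b1 b3 * qf P C b2 b4 + qf P C b1 b4 * qf P C b2 b3"
proof -
  define v where "v = (\<lambda>e2 e3 e4 k. b1 k + e2 * b2 k + e3 * b3 k + e4 * b4 k)"
  define F where "F = (\<lambda>e2 e3 e4 \<omega>. L (v e2 e3 e4) \<omega> ^ 4)"
  have Fi: "\<And>e2 e3 e4. integrable M (F e2 e3 e4)" unfolding F_def L_def by (rule lin_pow_int)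
  have FE: "\<And>e2 e3 e4. expectation (F e2 e3 e4) = 3 * (qf P C (v e2 e3 e4) (v e2 e3 e4))^2"
    unfolding F_def L_def by (rule lin_E4)
  have eq: "(\<lambda>\<omega>. L b1 \<omega> * L b2 \<omega> * L b3 \<omega> * L b4 \<omega>) = (\<lambda>\<omega>. (F 1 1 1 \<omega> - F 1 1 (-1) \<omega> - F 1 (-1) 1 \<omega> + F 1 (-1) (-1) \<omega>
     - F (-1) 1 1 \<omega> + F (-1) 1 (-1) \<omega> + F (-1) (-1) 1 \<omega> - F (-1) (-1) (-1) \<omega>) / 192)"
    apply (rule ext)
    apply (subst polar4)
    apply (simp add: F_def v_def L_def lin_combo)
    done
  show "integrable M (\<lambda>\<omega>. L b1 \<omega> * L b2 \<omega> * L b3 \<omega> * L b4 \<omega>)"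
    unfolding eq using Fi by simp
  have "expectation (\<lambda>\<omega>. L b1 \<omega> * L b2 \<omega> * L b3 \<omega> * L b4 \<omega>) =
     (expectation (F 1 1 1) - expectation (F 1 1 (-1)) - expectation (F 1 (-1) 1) + expectation (F 1 (-1) (-1))
     - expectation (F (-1) 1 1) + expectation (F (-1) 1 (-1)) + expectation (F (-1) (-1) 1) - expectation (F (-1) (-1) (-1))) / 192"
    unfolding eq using Fi by simp
  also have "\<dots> = qf P C b1 b2 * qf P C b3 b4 + qf P C b1 b3 * qf P C b2 b4 + qf P C b1 b4 * qf P C b2 b3"
    unfolding FE v_def qf_combo
    by (simp add: field_simps power2_eq_square)
  finally show "expectation (\<lambda>\<omega>. L b1 \<omega> * L b2 \<omega> * L b3 \<omega> * L b4 \<omega>)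
       = qf P C b1 b2 * qf P C b3 b4 + qf P C b1 b3 * qf P C b2 b4 + qf P C b1 b4 * qf P C b2 b3" .
qed

lemma prod2:
  defines "L \<equiv> \<lambda>b \<omega>. lin P b (Y \<omega>)"
  shows "integrable M (\<lambda>\<omega>. L b1 \<omega> * L b2 \<omega>)"
    and "expectation (\<lambda>\<omega>. L b1 \<omega> * L b2 \<omega>) = qf P C b1 b2"
proof -
  have s: "\<And>x y. qf P C x y = qf P C y x" by (rule qf_sym) (simp add: Csym)
  have eq: "(\<lambda>\<omega>. L b1 \<omega> * L b2 \<omega>) = (\<lambda>\<omega>. (L (\<lambda>k. b1 k + b2 k) \<omega> ^ 2 - L (\<lambda>k. b1 k - b2 k) \<omega> ^ 2) / 4)"
    by (rule ext, subst polar2) (simp add: L_def lin_add lin_diff)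
  have i: "\<And>b. integrable M (\<lambda>\<omega>. L b \<omega> ^ 2)" unfolding L_def by (rule lin_pow_int)
  show "integrable M (\<lambda>\<omega>. L b1 \<omega> * L b2 \<omega>)" unfolding eq using i by simp
  show "expectation (\<lambda>\<omega>. L b1 \<omega> * L b2 \<omega>) = qf P C b1 b2"
    unfolding eq using i
    by (simp add: L_def lin_E2 qf_add_left qf_add_right qf_diff_left qf_diff_right s[of b2 b1])
qed

end


lemma sum_delta1: "k < (P::nat) \<Longrightarrow> (\<Sum>j<P. (if j = k then 1 else 0) * (f j::real)) = f k"
proof -
  assume k: "k < P"
  have "(\<Sum>j<P. (if j = k then 1 else 0) * (f j::real)) = (\<Sum>j<P. if j = k then f j else 0)"
    by (rule sum.cong) auto
  then show ?thesis using k by simp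
qed
lemma sum_delta2: "k < (P::nat) \<Longrightarrow> (\<Sum>j<P. (if k = j then 1 else 0) * (f j::real)) = f k"
  using sum_delta1[of k P f] by (simp add: eq_commute)
lemma sum_delta3: "k < (P::nat) \<Longrightarrow> (\<Sum>j<P. (f j::real) * (if j = k then 1 else 0)) = f k"
  using sum_delta1[of k P f] by (simp add: mult.commute)
lemma sum_delta4: "k < (P::nat) \<Longrightarrow> (\<Sum>j<P. (f j::real) * (if k = j then 1 else 0)) = f k"
  using sum_delta1[of k P f] by (simp add: mult.commute eq_commute)

definition ev :: "nat \<Rightarrow> nat \<Rightarrow> real" where "ev k = (\<lambda>j. if j = k then 1 else 0)"

lemma lin_ev: "k < P \<Longrightarrow> lin P (ev k) y = y k"
  unfolding lin_def ev_def by (rule sum_delta1)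

lemma qf_ev_left: "k < P \<Longrightarrow> qf P A (ev k) y = (\<Sum>l<P. A k l * y l)"
  unfolding qf_def ev_def
  by (subst sum.swap) (simp add: mult.assoc sum_delta1)
lemma qf_ev_right: "l < P \<Longrightarrow> qf P A x (ev l) = (\<Sum>k<P. x k * A k l)"
  unfolding qf_def ev_def by (simp add: sum_delta3)

lemma qf_as_lin: "qf P S x y = (\<Sum>k<P. x k * lin P (\<lambda>l. S k l) y)"
  by (simp add: qf_def lin_def sum_distrib_left mult.assoc)

locale matinv =
  fixes P :: nat and Sg S :: "nat \<Rightarrow> nat \<Rightarrow> real"
  assumes Sgsym: "\<And>k l. k < P \<Longrightarrow> l < P \<Longrightarrow> Sg k l = Sg l k"
  and Sr: "\<And>k l. k < P \<Longrightarrow> l < P \<Longrightarrow> (\<Sum>j<P. Sg k j * S j l) = (if k = l then 1 else 0)"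
  and Sl: "\<And>k l. k < P \<Longrightarrow> l < P \<Longrightarrow> (\<Sum>j<P. S k j * Sg j l) = (if k = l then 1 else 0)"
begin

lemma Ssym: "k < P \<Longrightarrow> l < P \<Longrightarrow> S k l = S l k"
proof -
  assume k: "k < P" and l: "l < P"
  have "S k l = (\<Sum>j<P. (if k = j then 1 else 0) * S j l)"
    using k by (simp add: sum_delta2)
  also have "\<dots> = (\<Sum>j<P. (\<Sum>i<P. S i k * Sg i j) * S j l)"
  proof (intro sum.cong refl)
    fix j assume j: "j \<in> {..<P}"
    have "(\<Sum>i<P. S i k * Sg i j) = (\<Sum>i<P. Sg j i * S i k)"
      using j by (intro sum.cong refl) (simp add: Sgsym mult.commute)
    then show "(if k = j then 1 else 0) * S j l = (\<Sum>i<P. S i k * Sg i j) * S j l"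
      using j k by (simp add: Sr)
  qed
  also have "\<dots> = (\<Sum>i<P. S i k * (\<Sum>j<P. Sg i j * S j l))"
    by (simp add: sum_distrib_left sum_distrib_right mult.assoc) (rule sum.swap)
  also have "\<dots> = (\<Sum>i<P. S i k * (if i = l then 1 else 0))"
    by (intro sum.cong refl) (simp add: Sr l)
  also have "\<dots> = S l k" using l by (simp add: sum_delta3)
  finally show ?thesis .
qed

lemma SSgS: "k < P \<Longrightarrow> l < P \<Longrightarrow> qf P Sg (\<lambda>j. S k j) (\<lambda>j. S l j) = S k l"
proof -
  assume k: "k < P" and l: "l < P"
  have "qf P Sg (\<lambda>j. S k j) (\<lambda>j. S l j) = (\<Sum>a<P. S k a * (\<Sum>b<P. Sg a b * S b l))"
    unfolding qf_def by (intro sum.cong refl) (simp add: sum_distrib_left mult.assoc Ssym l)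
  also have "\<dots> = (\<Sum>a<P. S k a * (if a = l then 1 else 0))"
    by (intro sum.cong refl) (simp add: Sr l)
  also have "\<dots> = S k l" using l by (simp add: sum_delta3)
  finally show ?thesis .
qed

lemma trace_SgS: "(\<Sum>k<P. \<Sum>l<P. Sg k l * S k l) = real P"
proof -
  have "(\<Sum>k<P. \<Sum>l<P. Sg k l * S k l) = (\<Sum>k<P. \<Sum>l<P. Sg k l * S l k)"
    by (intro sum.cong refl) (simp add: Ssym)
  also have "\<dots> = (\<Sum>k<P. (1::real))" by (intro sum.cong refl) (simp add: Sr)
  finally show ?thesis by simp
qed

lemma trace_SSg: "(\<Sum>k<P. \<Sum>l<P. S k l * Sg k l) = real P"
  using trace_SgS by (simp add: mult.commute)

end


lemma qf_div_mat: "qf P (\<lambda>k l. A k l / t) x y = qf P A x y / t"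
  by (simp add: qf_def sum_divide_distrib)

locale gvec2 = gvec M P Y C + matinv P Sg S
  for M :: "'a measure" and P Y C Sg S +
  fixes t :: real
  assumes tpos: "t > 0" and Cdef: "C = (\<lambda>k l. Sg k l / t)"
begin

lemma c_es: "k < P \<Longrightarrow> l < P \<Longrightarrow> qf P C (ev k) (\<lambda>j. S l j) = (if k = l then 1 else 0) / t"
proof -
  assume k: "k < P" and l: "l < P"
  have "qf P C (ev k) (\<lambda>j. S l j) = (\<Sum>j<P. Sg k j * S j l) / t"
    unfolding qf_ev_left[OF k] Cdef by (simp add: sum_divide_distrib Ssym l)
  then show ?thesis using k l by (simp add: Sr)
qed

lemma c_se: "k < P \<Longrightarrow> l < P \<Longrightarrow> qf P C (\<lambda>j. S k j) (ev l) = (if k = l then 1 else 0) / t"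
proof -
  assume k: "k < P" and l: "l < P"
  have "qf P C (\<lambda>j. S k j) (ev l) = (\<Sum>j<P. S k j * Sg j l) / t"
    unfolding qf_ev_right[OF l] Cdef by (simp add: sum_divide_distrib)
  then show ?thesis using k l by (simp add: Sl)
qed

lemma c_ee: "k < P \<Longrightarrow> l < P \<Longrightarrow> qf P C (ev k) (ev l) = Sg k l / t"
  by (simp only: qf_ev_left) (simp add: ev_def Cdef sum_divide_distrib[symmetric] sum_delta3)

lemma c_ss: "k < P \<Longrightarrow> l < P \<Longrightarrow> qf P C (\<lambda>j. S k j) (\<lambda>j. S l j) = S k l / t"
  by (simp add: Cdef qf_div_mat SSgS)

abbreviation L where "L b \<omega> \<equiv> lin P b (Y \<omega>)"

lemma Q_eq: "qf P S (Y \<omega>) (Y \<omega>) = (\<Sum>k<P. L (ev k) \<omega> * L (\<lambda>j. S k j) \<omega>)"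
  unfolding qf_as_lin by (intro sum.cong refl) (simp add: lin_ev)

lemma Q_int: "integrable M (\<lambda>\<omega>. qf P S (Y \<omega>) (Y \<omega>))"
  unfolding Q_eq by (intro Bochner_Integration.integrable_sum prod2(1))

lemma Q_E: "expectation (\<lambda>\<omega>. qf P S (Y \<omega>) (Y \<omega>)) = real P / t"
proof -
  have "expectation (\<lambda>\<omega>. qf P S (Y \<omega>) (Y \<omega>)) = (\<Sum>k<P. expectation (\<lambda>\<omega>. L (ev k) \<omega> * L (\<lambda>j. S k j) \<omega>))"
    unfolding Q_eq by (intro Bochner_Integration.integral_sum prod2(1))
  also have "\<dots> = (\<Sum>k<P. 1 / t)"
    by (intro sum.cong refl) (simp add: prod2(2) c_es)
  finally show ?thesis by simp
qed

lemma Q2_eq: "(qf P S (Y \<omega>) (Y \<omega>))^2 = (\<Sum>k<P. \<Sum>l<P. L (ev k) \<omega> * L (\<lambda>j. S k j) \<omega> * L (ev l) \<omega> * L (\<lambda>j. S l j) \<omega>)"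
  unfolding Q_eq power2_eq_square sum_product by (simp add: mult.assoc)

lemma Q2_int: "integrable M (\<lambda>\<omega>. (qf P S (Y \<omega>) (Y \<omega>))^2)"
  unfolding Q2_eq by (intro Bochner_Integration.integrable_sum isserlis(1))

lemma Q2_E: "expectation (\<lambda>\<omega>. (qf P S (Y \<omega>) (Y \<omega>))^2) = (real P / t)^2 + 2 * real P / t^2"
proof -
  have "expectation (\<lambda>\<omega>. (qf P S (Y \<omega>) (Y \<omega>))^2) = (\<Sum>k<P. \<Sum>l<P. expectation (\<lambda>\<omega>. L (ev k) \<omega> * L (\<lambda>j. S k j) \<omega> * L (ev l) \<omega> * L (\<lambda>j. S l j) \<omega>))"
    unfolding Q2_eq by (simp add: Bochner_Integration.integral_sum Bochner_Integration.integrable_sum isserlis(1))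
  also have "\<dots> = (\<Sum>k<P. \<Sum>l<P. 1/t^2 + (Sg k l * S k l) / t^2 + (if k = l then 1 else 0) / t^2)"
    by (intro sum.cong refl) (simp add: isserlis(2) c_es c_se c_ee c_ss power2_eq_square)
  also have "\<dots> = (\<Sum>k<P. real P / t^2 + (\<Sum>l<P. Sg k l * S k l) / t^2 + 1 / t^2)"
    by (intro sum.cong refl) (simp add: sum.distrib sum_divide_distrib[symmetric])
  also have "\<dots> = real P * real P / t^2 + (\<Sum>k<P. \<Sum>l<P. Sg k l * S k l) / t^2 + real P / t^2"
    by (simp add: sum.distrib sum_divide_distrib[symmetric])
  also have "\<dots> = (real P / t)^2 + 2 * real P / t^2"
    using trace_SSg by (simp add: power2_eq_square field_simps)
  finally show ?thesis .
qed

lemma Q_var: "integrable M (\<lambda>\<omega>. (qf P S (Y \<omega>) (Y \<omega>) - real P / t)^2)"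
   "expectation (\<lambda>\<omega>. (qf P S (Y \<omega>) (Y \<omega>) - real P / t)^2) = 2 * real P / t^2"
proof -
  have eq: "(\<lambda>\<omega>. (qf P S (Y \<omega>) (Y \<omega>) - real P / t)^2) = (\<lambda>\<omega>. (qf P S (Y \<omega>) (Y \<omega>))^2 - 2 * (real P / t) * qf P S (Y \<omega>) (Y \<omega>) + (real P / t)^2)"
    by (simp add: power2_eq_square algebra_simps)
  show "integrable M (\<lambda>\<omega>. (qf P S (Y \<omega>) (Y \<omega>) - real P / t)^2)"
    unfolding eq using Q_int Q2_int by simp
  show "expectation (\<lambda>\<omega>. (qf P S (Y \<omega>) (Y \<omega>) - real P / t)^2) = 2 * real P / t^2"
    unfolding eq using Q_int Q2_int by (simp add: Q_E Q2_E[unfolded power2_eq_square] power2_eq_square prob_space)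
qed

lemma A_eq: "qf P S a (Y \<omega>) = (\<Sum>k<P. a k * L (\<lambda>j. S k j) \<omega>)"
  by (rule qf_as_lin)

lemma A_var: "integrable M (\<lambda>\<omega>. (qf P S a (Y \<omega>))^2)"
   "expectation (\<lambda>\<omega>. (qf P S a (Y \<omega>))^2) = qf P S a a / t"
proof -
  have eq: "(\<lambda>\<omega>. (qf P S a (Y \<omega>))^2) = (\<lambda>\<omega>. \<Sum>k<P. \<Sum>l<P. a k * a l * (L (\<lambda>j. S k j) \<omega> * L (\<lambda>j. S l j) \<omega>))"
    unfolding A_eq power2_eq_square sum_product by (simp add: ac_simps)
  show "integrable M (\<lambda>\<omega>. (qf P S a (Y \<omega>))^2)"
    unfolding eq by (intro Bochner_Integration.integrable_sum integrable_mult_right prod2(1))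
  have "expectation (\<lambda>\<omega>. (qf P S a (Y \<omega>))^2) = (\<Sum>k<P. \<Sum>l<P. a k * a l * (S k l / t))"
    unfolding eq by (simp add: Bochner_Integration.integral_sum Bochner_Integration.integrable_sum prod2 c_ss)
  also have "\<dots> = qf P S a a / t"
    by (simp add: qf_def sum_divide_distrib ac_simps)
  finally show "expectation (\<lambda>\<omega>. (qf P S a (Y \<omega>))^2) = qf P S a a / t" .
qed

end


lemma lin_meas_Pi[measurable]: "(\<lambda>y. lin P b y) \<in> borel_measurable (PiM {..<P} (\<lambda>_. borel))"
  unfolding lin_def by measurable

lemma indep_pair:
  assumes g1: "gvec2 M P Y1 C1 Sg S t1" and g2: "gvec2 M P Y2 C2 Sg S t2"
    and ind: "prob_space.indep_var M (PiM {..<P} (\<lambda>_. borel)) Y1 (PiM {..<P} (\<lambda>_. borel)) Y2"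
  shows "integrable M (\<lambda>\<omega>. (qf P S (Y1 \<omega>) (Y2 \<omega>))^2)"
    and "integral\<^sup>L M (\<lambda>\<omega>. (qf P S (Y1 \<omega>) (Y2 \<omega>))^2) = real P / (t1 * t2)"
proof -
  interpret A: gvec2 M P Y1 C1 Sg S t1 by (rule g1)
  interpret B: gvec2 M P Y2 C2 Sg S t2 by (rule g2)
  define f where "f = (\<lambda>k l \<omega>. lin P (ev k) (Y1 \<omega>) * lin P (ev l) (Y1 \<omega>))"
  define g where "g = (\<lambda>k l \<omega>. lin P (\<lambda>j. S k j) (Y2 \<omega>) * lin P (\<lambda>j. S l j) (Y2 \<omega>))"
  have eq: "(\<lambda>\<omega>. (qf P S (Y1 \<omega>) (Y2 \<omega>))^2) = (\<lambda>\<omega>. \<Sum>k<P. \<Sum>l<P. f k l \<omega> * g k l \<omega>)"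
  proof
    fix \<omega>
    have q: "qf P S (Y1 \<omega>) (Y2 \<omega>) = (\<Sum>k<P. lin P (ev k) (Y1 \<omega>) * lin P (\<lambda>j. S k j) (Y2 \<omega>))"
      unfolding qf_as_lin by (intro sum.cong refl) (simp add: lin_ev)
    show "(qf P S (Y1 \<omega>) (Y2 \<omega>))^2 = (\<Sum>k<P. \<Sum>l<P. f k l \<omega> * g k l \<omega>)"
      unfolding power2_eq_square q sum_product f_def g_def by (simp add: ac_simps)
  qed
  have indfg: "A.indep_var borel (f k l) borel (g k l)" for k l
  proof -
    have "A.indep_var borel ((\<lambda>y. lin P (ev k) y * lin P (ev l) y) \<circ> Y1) borel ((\<lambda>y. lin P (\<lambda>j. S k j) y * lin P (\<lambda>j. S l j) y) \<circ> Y2)"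
      by (rule A.indep_var_compose[OF ind]) measurable
    then show ?thesis by (simp add: f_def g_def comp_def)
  qed
  have fi: "integrable M (f k l)" for k l unfolding f_def by (rule A.prod2(1))
  have gi: "integrable M (g k l)" for k l unfolding g_def by (rule B.prod2(1))
  have fgi: "integrable M (\<lambda>\<omega>. f k l \<omega> * g k l \<omega>)" for k l
    by (rule A.indep_var_integrable[OF indfg fi gi])
  show "integrable M (\<lambda>\<omega>. (qf P S (Y1 \<omega>) (Y2 \<omega>))^2)"
    unfolding eq by (intro Bochner_Integration.integrable_sum fgi)
  have "integral\<^sup>L M (\<lambda>\<omega>. (qf P S (Y1 \<omega>) (Y2 \<omega>))^2) = (\<Sum>k<P. \<Sum>l<P. integral\<^sup>L M (f k l) * integral\<^sup>L M (g k l))"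
    unfolding eq by (simp add: Bochner_Integration.integral_sum Bochner_Integration.integrable_sum fgi
       A.indep_var_lebesgue_integral[OF indfg fi gi])
  also have "\<dots> = (\<Sum>k<P. \<Sum>l<P. (Sg k l * S k l) / (t1 * t2))"
    by (intro sum.cong refl) (simp add: f_def g_def A.prod2(2) B.prod2(2) A.c_ee B.c_ss)
  also have "\<dots> = real P / (t1 * t2)"
    using A.trace_SgS by (simp add: sum_divide_distrib[symmetric])
  finally show "integral\<^sup>L M (\<lambda>\<omega>. (qf P S (Y1 \<omega>) (Y2 \<omega>))^2) = real P / (t1 * t2)" .
qed


definition cip :: "(nat \<Rightarrow> 'a measure) \<Rightarrow> (nat \<Rightarrow> 'a \<Rightarrow> real) \<Rightarrow> real \<Rightarrow> bool" where
  "cip M X c \<longleftrightarrow> (\<forall>e>0. \<exists>B. (\<forall>p. B p \<in> sets (M p)) \<and> (\<lambda>p. measure (M p) (B p)) \<longlonglongrightarrow> 0 \<and>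
      (\<forall>\<^sub>F p in sequentially. \<forall>\<omega>\<in>space (M p) - B p. \<bar>X p \<omega> - c\<bar> \<le> e))"

locale cipl =
  fixes M :: "nat \<Rightarrow> 'a measure"
  assumes prob: "\<And>p. prob_space (M p)"
begin

lemma cip_const: "s \<longlonglongrightarrow> c \<Longrightarrow> cip M (\<lambda>p \<omega>. s p) c"
  unfolding cip_def
proof (intro allI impI exI[of _ "\<lambda>p. {}"] conjI)
  fix e :: real assume "s \<longlonglongrightarrow> c" "e > 0"
  then have "\<forall>\<^sub>F p in sequentially. dist (s p) c < e" by (rule tendstoD)
  then show "\<forall>\<^sub>F p in sequentially. \<forall>\<omega>\<in>space (M p) - {}. \<bar>s p - c\<bar> \<le> e"
    by eventually_elim (simp add: dist_real_def)
qed auto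

lemma cip_cong: "cip M X c \<Longrightarrow> (\<forall>\<^sub>F p in sequentially. \<forall>\<omega>\<in>space (M p). X p \<omega> = Y p \<omega>) \<Longrightarrow> c = d \<Longrightarrow> cip M Y d"
  unfolding cip_def
proof (intro allI impI)
  fix e :: real assume c: "\<forall>e>0. \<exists>B. (\<forall>p. B p \<in> sets (M p)) \<and> (\<lambda>p. measure (M p) (B p)) \<longlonglongrightarrow> 0 \<and>
      (\<forall>\<^sub>F p in sequentially. \<forall>\<omega>\<in>space (M p) - B p. \<bar>X p \<omega> - c\<bar> \<le> e)"
    and ev: "\<forall>\<^sub>F p in sequentially. \<forall>\<omega>\<in>space (M p). X p \<omega> = Y p \<omega>" and cd: "c = d" and e: "e > 0"
  obtain B where B: "\<forall>p. B p \<in> sets (M p)" "(\<lambda>p. measure (M p) (B p)) \<longlonglongrightarrow> 0"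
    "\<forall>\<^sub>F p in sequentially. \<forall>\<omega>\<in>space (M p) - B p. \<bar>X p \<omega> - c\<bar> \<le> e" using c e by blast
  show "\<exists>B. (\<forall>p. B p \<in> sets (M p)) \<and> (\<lambda>p. measure (M p) (B p)) \<longlonglongrightarrow> 0 \<and>
      (\<forall>\<^sub>F p in sequentially. \<forall>\<omega>\<in>space (M p) - B p. \<bar>Y p \<omega> - d\<bar> \<le> e)"
    using B(1,2) eventually_conj[OF B(3) ev] cd
    by (intro exI[of _ B] conjI) (auto elim!: eventually_mono)
qed

lemma cip_comp2:
  assumes X: "cip M X a" and Y: "cip M Y b" and f: "isCont (\<lambda>z. f (fst z) (snd z)) (a, b)"
  shows "cip M (\<lambda>p \<omega>. f (X p \<omega>) (Y p \<omega>)) (f a b)"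
  unfolding cip_def
proof (intro allI impI)
  fix e :: real assume e: "e > 0"
  obtain d where d: "d > 0" "\<And>z. dist z (a, b) < d \<Longrightarrow> dist (f (fst z) (snd z)) (f a b) < e"
    using f e unfolding continuous_at_eps_delta by fastforce
  have d2: "d / 4 > 0" using d by simp
  obtain B1 where B1: "\<forall>p. B1 p \<in> sets (M p)" "(\<lambda>p. measure (M p) (B1 p)) \<longlonglongrightarrow> 0"
    "\<forall>\<^sub>F p in sequentially. \<forall>\<omega>\<in>space (M p) - B1 p. \<bar>X p \<omega> - a\<bar> \<le> d / 4"
    using X d2 unfolding cip_def by blast
  obtain B2 where B2: "\<forall>p. B2 p \<in> sets (M p)" "(\<lambda>p. measure (M p) (B2 p)) \<longlonglongrightarrow> 0"
    "\<forall>\<^sub>F p in sequentially. \<forall>\<omega>\<in>space (M p) - B2 p. \<bar>Y p \<omega> - b\<bar> \<le> d / 4"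
    using Y d2 unfolding cip_def by blast
  have m: "(\<lambda>p. measure (M p) (B1 p \<union> B2 p)) \<longlonglongrightarrow> 0"
  proof (rule tendsto_sandwich[of "\<lambda>_. 0" _ _ "\<lambda>p. measure (M p) (B1 p) + measure (M p) (B2 p)"])
    show "\<forall>\<^sub>F n in sequentially. 0 \<le> measure (M n) (B1 n \<union> B2 n)" by simp
    show "\<forall>\<^sub>F n in sequentially. measure (M n) (B1 n \<union> B2 n) \<le> measure (M n) (B1 n) + measure (M n) (B2 n)"
      using B1(1) B2(1) by (intro always_eventually allI measure_Un_le) (auto intro: prob_space.finite_measure[OF prob])
    show "(\<lambda>p. measure (M p) (B1 p) + measure (M p) (B2 p)) \<longlonglongrightarrow> 0"
      using tendsto_add[OF B1(2) B2(2)] by simp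
  qed simp
  have ev: "\<forall>\<^sub>F p in sequentially. \<forall>\<omega>\<in>space (M p) - (B1 p \<union> B2 p). \<bar>f (X p \<omega>) (Y p \<omega>) - f a b\<bar> \<le> e"
    using eventually_conj[OF B1(3) B2(3)]
  proof eventually_elim
    case (elim p)
    show ?case
    proof
      fix \<omega> assume w: "\<omega> \<in> space (M p) - (B1 p \<union> B2 p)"
      then have "\<bar>X p \<omega> - a\<bar> \<le> d / 4" "\<bar>Y p \<omega> - b\<bar> \<le> d / 4" using elim by auto
      then have "dist (X p \<omega>, Y p \<omega>) (a, b) < d"
        using d(1) sqrt_sum_squares_le_sum_abs[of "X p \<omega> - a" "Y p \<omega> - b"]
        by (simp add: dist_Pair_Pair dist_real_def)
      from d(2)[OF this] show "\<bar>f (X p \<omega>) (Y p \<omega>) - f a b\<bar> \<le> e" by (simp add: dist_real_def)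
    qed
  qed
  show "\<exists>B. (\<forall>p. B p \<in> sets (M p)) \<and> (\<lambda>p. measure (M p) (B p)) \<longlonglongrightarrow> 0 \<and>
      (\<forall>\<^sub>F p in sequentially. \<forall>\<omega>\<in>space (M p) - B p. \<bar>f (X p \<omega>) (Y p \<omega>) - f a b\<bar> \<le> e)"
    using B1(1) B2(1) m ev by (intro exI[of _ "\<lambda>p. B1 p \<union> B2 p"]) auto
qed

lemma cip_comp1:
  assumes X: "cip M X a" and f: "isCont f a"
  shows "cip M (\<lambda>p \<omega>. f (X p \<omega>)) (f a)"
proof -
  have "cip M (\<lambda>p \<omega>. (\<lambda>x y. f x) (X p \<omega>) (X p \<omega>)) ((\<lambda>x y. f x) a a)"
    by (rule cip_comp2[OF X X]) (rule isCont_o2[where f=fst and a="(a, a)" and g=f], simp_all add: f)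
  then show ?thesis by simp
qed

lemma cip_add: "cip M X a \<Longrightarrow> cip M Y b \<Longrightarrow> cip M (\<lambda>p \<omega>. X p \<omega> + Y p \<omega>) (a + b)"
  using cip_comp2[of X a Y b "(+)"] by simp
lemma cip_diff: "cip M X a \<Longrightarrow> cip M Y b \<Longrightarrow> cip M (\<lambda>p \<omega>. X p \<omega> - Y p \<omega>) (a - b)"
  using cip_comp2[of X a Y b "(-)"] by simp
lemma cip_mult: "cip M X a \<Longrightarrow> cip M Y b \<Longrightarrow> cip M (\<lambda>p \<omega>. X p \<omega> * Y p \<omega>) (a * b)"
  using cip_comp2[of X a Y b "(*)"] by simp
lemma cip_divide: "cip M X a \<Longrightarrow> cip M Y b \<Longrightarrow> b \<noteq> 0 \<Longrightarrow> cip M (\<lambda>p \<omega>. X p \<omega> / Y p \<omega>) (a / b)"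
  using cip_comp2[of X a Y b "(/)"] by simp
lemma cip_sqrt: "cip M X a \<Longrightarrow> cip M (\<lambda>p \<omega>. sqrt (X p \<omega>)) (sqrt a)"
  using cip_comp1[of X a sqrt] isCont_real_sqrt by simp
lemma cip_minus: "cip M X a \<Longrightarrow> cip M (\<lambda>p \<omega>. - X p \<omega>) (- a)"
  using cip_comp1[of X a uminus] by simp


lemma cip_L2:
  assumes meas: "\<forall>\<^sub>F p in sequentially. X p \<in> borel_measurable (M p)"
    and int: "\<forall>\<^sub>F p in sequentially. integrable (M p) (\<lambda>\<omega>. (X p \<omega> - s p)^2)"
    and lim: "(\<lambda>p. integral\<^sup>L (M p) (\<lambda>\<omega>. (X p \<omega> - s p)^2)) \<longlonglongrightarrow> 0"
    and s: "s \<longlonglongrightarrow> c"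
  shows "cip M X c"
  unfolding cip_def
proof (intro allI impI)
  fix e :: real assume e: "e > 0"
  define B where "B = (\<lambda>p. if X p \<in> borel_measurable (M p) then {\<omega> \<in> space (M p). (e/2)^2 \<le> (X p \<omega> - s p)^2} else space (M p))"
  have Bs: "\<forall>p. B p \<in> sets (M p)"
  proof
    fix p show "B p \<in> sets (M p)"
    proof (cases "X p \<in> borel_measurable (M p)")
      case True
      then show ?thesis unfolding B_def by simp measurable
    qed (simp add: B_def)
  qed
  have Bm: "(\<lambda>p. measure (M p) (B p)) \<longlonglongrightarrow> 0"
  proof (rule tendsto_sandwich[of "\<lambda>_. 0" _ _ "\<lambda>p. integral\<^sup>L (M p) (\<lambda>\<omega>. (X p \<omega> - s p)^2) / (e/2)^2"])
    show "\<forall>\<^sub>F n in sequentially. 0 \<le> measure (M n) (B n)" by simp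
    show "\<forall>\<^sub>F n in sequentially. measure (M n) (B n) \<le> integral\<^sup>L (M n) (\<lambda>\<omega>. (X n \<omega> - s n)^2) / (e/2)^2"
      using eventually_conj[OF meas int]
    proof eventually_elim
      case (elim p)
      then have [measurable]: "X p \<in> borel_measurable (M p)" by simp
      have "measure (M p) {\<omega> \<in> space (M p). (e/2)^2 \<le> (X p \<omega> - s p)^2} \<le> integral\<^sup>L (M p) (\<lambda>\<omega>. (X p \<omega> - s p)^2) / (e/2)^2"
        using elim e by (intro integral_Markov_inequality_measure[where A="space (M p)"]) auto
      then show ?case unfolding B_def using elim by simp
    qed
    show "(\<lambda>p. integral\<^sup>L (M p) (\<lambda>\<omega>. (X p \<omega> - s p)^2) / (e/2)^2) \<longlonglongrightarrow> 0"
      using tendsto_divide[OF lim tendsto_const[of "(e/2)^2"]] e by simp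
  qed simp
  have sc: "\<forall>\<^sub>F p in sequentially. \<bar>s p - c\<bar> < e/2"
    using tendstoD[OF s, of "e/2"] e by (simp add: dist_real_def)
  have ev: "\<forall>\<^sub>F p in sequentially. \<forall>\<omega>\<in>space (M p) - B p. \<bar>X p \<omega> - c\<bar> \<le> e"
    using eventually_conj[OF meas sc]
  proof eventually_elim
    case (elim p)
    show ?case
    proof
      fix \<omega> assume "\<omega> \<in> space (M p) - B p"
      then have "(X p \<omega> - s p)^2 < (e/2)^2" using elim by (auto simp: B_def)
      then have "\<bar>X p \<omega> - s p\<bar> < e/2"
        using e abs_le_square_iff[of "e/2" "X p \<omega> - s p"] by (auto simp: not_less[symmetric])
      then show "\<bar>X p \<omega> - c\<bar> \<le> e" using elim by linarith
    qed
  qed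
  show "\<exists>B. (\<forall>p. B p \<in> sets (M p)) \<and> (\<lambda>p. measure (M p) (B p)) \<longlonglongrightarrow> 0 \<and>
      (\<forall>\<^sub>F p in sequentially. \<forall>\<omega>\<in>space (M p) - B p. \<bar>X p \<omega> - c\<bar> \<le> e)"
    using Bs Bm ev by blast
qed

lemma cip_bounded_L2:
  assumes meas: "\<And>p. X p \<in> borel_measurable (M p)"
    and bnd: "\<And>p \<omega>. \<omega> \<in> space (M p) \<Longrightarrow> \<bar>X p \<omega> - c\<bar> \<le> 1"
    and X: "cip M X c"
  shows "(\<lambda>p. integral\<^sup>L (M p) (\<lambda>\<omega>. (X p \<omega> - c)^2)) \<longlonglongrightarrow> 0"
proof (rule LIMSEQ_I)
  fix r :: real assume r: "r > 0"
  define e where "e = sqrt (r/4)"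
  have e: "e > 0" "e^2 = r/4" using r by (auto simp: e_def)
  obtain B where B: "\<forall>p. B p \<in> sets (M p)" "(\<lambda>p. measure (M p) (B p)) \<longlonglongrightarrow> 0"
    "\<forall>\<^sub>F p in sequentially. \<forall>\<omega>\<in>space (M p) - B p. \<bar>X p \<omega> - c\<bar> \<le> e"
    using X e unfolding cip_def by blast
  have "\<forall>\<^sub>F p in sequentially. dist (measure (M p) (B p)) 0 < r/2"
    using tendstoD[OF B(2), of "r/2"] r by simp
  with B(3) have "\<forall>\<^sub>F p in sequentially. norm (integral\<^sup>L (M p) (\<lambda>\<omega>. (X p \<omega> - c)^2) - 0) < r"
  proof eventually_elim
    case (elim p)
    interpret prob_space "M p" by (rule prob)
    have [measurable]: "X p \<in> borel_measurable (M p)" by (rule meas)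
    have i1: "integrable (M p) (\<lambda>\<omega>. (X p \<omega> - c)^2)"
    proof (rule integrable_const_bound[where B=1])
      show "AE \<omega> in M p. norm ((X p \<omega> - c)^2) \<le> 1"
        using bnd by (intro AE_I2) (simp add: abs_square_le_1)
    qed measurable
    have i2: "integrable (M p) (\<lambda>\<omega>. e^2 + indicator (B p) \<omega>)"
      using B(1) by (intro Bochner_Integration.integrable_add) (auto simp: emeasure_eq_measure)
    have "integral\<^sup>L (M p) (\<lambda>\<omega>. (X p \<omega> - c)^2) \<le> integral\<^sup>L (M p) (\<lambda>\<omega>. e^2 + indicator (B p) \<omega>)"
    proof (rule integral_mono[OF i1 i2])
      fix \<omega> assume w: "\<omega> \<in> space (M p)"
      show "(X p \<omega> - c)^2 \<le> e^2 + indicator (B p) \<omega>"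
      proof (cases "\<omega> \<in> B p")
        case True
        have "(X p \<omega> - c)^2 \<le> 1" using bnd[OF w] by (simp add: abs_square_le_1)
        then show ?thesis using True by (simp add: add_increasing)
      next
        case False
        then have "\<bar>X p \<omega> - c\<bar> \<le> e" using elim w by auto
        then have "(X p \<omega> - c)^2 \<le> e^2" using e(1) power2_le_iff_abs_le[of e "X p \<omega> - c"] by simp
        then show ?thesis using False by simp
      qed
    qed
    also have "\<dots> = e^2 + measure (M p) (B p)"
      using B(1) prob_space by (subst Bochner_Integration.integral_add) (auto simp: emeasure_eq_measure)
    also have "\<dots> < r" using elim e r by (simp add: algebra_simps)
    finally have "integral\<^sup>L (M p) (\<lambda>\<omega>. (X p \<omega> - c)^2) < r" .
    moreover have "0 \<le> integral\<^sup>L (M p) (\<lambda>\<omega>. (X p \<omega> - c)^2)" by (intro integral_nonneg_AE) simp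
    ultimately show ?case by simp
  qed
  then show "\<exists>no. \<forall>n\<ge>no. norm (integral\<^sup>L (M n) (\<lambda>\<omega>. (X n \<omega> - c)^2) - 0) < r"
    by (simp add: eventually_sequentially)
qed

end


context cipl begin

lemma cip_sum: "finite I \<Longrightarrow> (\<And>i. i \<in> I \<Longrightarrow> cip M (X i) (c i)) \<Longrightarrow> cip M (\<lambda>p \<omega>. \<Sum>i\<in>I. X i p \<omega>) (\<Sum>i\<in>I. c i)"
proof (induction I rule: finite_induct)
  case empty
  then show ?case using cip_const[of "\<lambda>_. 0" 0] by simp
next
  case (insert x F)
  then show ?case using cip_add[of "X x" "c x" "\<lambda>p \<omega>. \<Sum>i\<in>F. X i p \<omega>" "\<Sum>i\<in>F. c i"] by simp
qed

lemma cip_bilin: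
  assumes leaf: "\<And>i j. i < (N::nat) \<Longrightarrow> j < N \<Longrightarrow> cip M (Q i j) (Lt i j)"
    and a: "\<And>i. i < N \<Longrightarrow> (\<lambda>p. a p i) \<longlonglongrightarrow> \<alpha> i"
    and b: "\<And>j. j < N \<Longrightarrow> (\<lambda>p. b p j) \<longlonglongrightarrow> \<beta> j"
  shows "cip M (\<lambda>p \<omega>. \<Sum>i<N. \<Sum>j<N. a p i * b p j * Q i j p \<omega>) (\<Sum>i<N. \<Sum>j<N. \<alpha> i * \<beta> j * Lt i j)"
proof (intro cip_sum finite_lessThan)
  fix i j assume i: "i \<in> {..<N}" and j: "j \<in> {..<N}"
  have "cip M (\<lambda>p \<omega>. a p i * b p j) (\<alpha> i * \<beta> j)"
    using i j by (intro cip_const tendsto_mult a b) auto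
  from cip_mult[OF this leaf] i j
  show "cip M (\<lambda>p \<omega>. a p i * b p j * Q i j p \<omega>) (\<alpha> i * \<beta> j * Lt i j)" by simp
qed

end

lemma qf_sum_left: "qf P A (\<lambda>k. \<Sum>i<(N::nat). a i * v i k) y = (\<Sum>i<N. a i * qf P A (v i) y)"
  by (induction N) (simp_all add: qf_add_left qf_scale_left qf_zero_left)
lemma qf_sum_right: "qf P A y (\<lambda>k. \<Sum>i<(N::nat). a i * v i k) = (\<Sum>i<N. a i * qf P A y (v i))"
  by (induction N) (simp_all add: qf_add_right qf_scale_right qf_def)

lemma qf_lincomb:
  "qf P A (\<lambda>k. \<Sum>i<(N::nat). a i * v i k) (\<lambda>k. \<Sum>j<N. b j * w j k) = (\<Sum>i<N. \<Sum>j<N. a i * b j * qf P A (v i) (w j))"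
  by (simp add: qf_sum_left qf_sum_right sum_distrib_left mult.assoc)

lemma Phi_cdf: "Phi x = cdf (density lborel std_normal_density) x"
  by (simp add: Phi_def cdf_def)

lemma real_distribution_std: "real_distribution (density lborel std_normal_density)"
proof -
  interpret prob_space "density lborel std_normal_density" by (rule prob_space_normal_density) simp
  show ?thesis by unfold_locales simp
qed

lemma Phi_bounds: "0 \<le> Phi x" "Phi x \<le> 1"
proof -
  interpret D: real_distribution "density lborel std_normal_density" by (rule real_distribution_std)
  show "0 \<le> Phi x" "Phi x \<le> 1" unfolding Phi_cdf using D.cdf_nonneg D.cdf_bounded_prob by auto
qed

lemma Phi_cont: "isCont Phi x"
proof -
  interpret D: real_distribution "density lborel std_normal_density" by (rule real_distribution_std)
  have "emeasure (density lborel std_normal_density) {x} = 0"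
    by (subst emeasure_density) (auto intro!: nn_integral_null_set[simplified] simp: )
  then have "measure (density lborel std_normal_density) {x} = 0" by (simp add: measure_def)
  then show ?thesis
    unfolding Phi_cdf[abs_def] using D.isCont_cdf by simp
qed

lemma Phi_meas[measurable]: "Phi \<in> borel_measurable borel"
  by (intro borel_measurable_continuous_onI continuous_at_imp_continuous_on ballI Phi_cont)


locale model =
  fixes a0 :: real
    and M :: "nat \<Rightarrow> 'a measure"
    and Sig Sinv :: "nat \<Rightarrow> nat \<Rightarrow> nat \<Rightarrow> real"
    and n :: "nat \<Rightarrow> nat \<Rightarrow> nat"
    and nu :: "nat \<Rightarrow> nat \<Rightarrow> real"
    and m :: "nat \<Rightarrow> nat \<Rightarrow> nat \<Rightarrow> real"
    and mu :: "nat \<Rightarrow> nat \<Rightarrow> 'a \<Rightarrow> nat \<Rightarrow> real"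
    and X :: "nat \<Rightarrow> nat \<Rightarrow> nat \<Rightarrow> 'a \<Rightarrow> nat \<Rightarrow> real"
    and J gam :: "nat \<Rightarrow> real"
    and Dbar2 :: real
  assumes a0: "0 < a0" "a0 < 1"
    and Sig_sym: "\<And>p k l. k < p \<Longrightarrow> l < p \<Longrightarrow> Sig p k l = Sig p l k"
    and Sig_pd: "\<And>p x. (\<exists>k<p. x k \<noteq> 0) \<Longrightarrow> qf p (Sig p) x x > 0"
    and Sinv_r: "\<And>p k l. k < p \<Longrightarrow> l < p \<Longrightarrow>
                   (\<Sum>j<p. Sig p k j * Sinv p j l) = (if k = l then 1 else 0)"
    and Sinv_l: "\<And>p k l. k < p \<Longrightarrow> l < p \<Longrightarrow>
                   (\<Sum>j<p. Sinv p k j * Sig p j l) = (if k = l then 1 else 0)"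
    and nu_pos: "\<And>i p. i < 2 \<Longrightarrow> nu i p > 0"
    and prob: "\<And>p. prob_space (M p)"
    and mu_law: "\<And>i p. i < 2 \<Longrightarrow>
                   mvn (M p) p (mu p i) (m i p) (\<lambda>k l. Sig p k l / nu i p)"
    and noise_law: "\<And>i j p. i < 2 \<Longrightarrow> j < n i p \<Longrightarrow>
                   mvn (M p) p (\<lambda>\<omega>. restrict (\<lambda>k. X p i j \<omega> k - mu p i \<omega> k) {..<p}) (\<lambda>_. 0) (Sig p)"
    and indep: "\<And>p. prob_space.indep_vars (M p) (\<lambda>_. PiM {..<p} (\<lambda>_. borel))
                   (\<lambda>r \<omega>. case r of MuI i \<Rightarrow> mu p i \<omega>
                     | NoiseI i j \<Rightarrow> restrict (\<lambda>k. X p i j \<omega> k - mu p i \<omega> k) {..<p})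
                   ({MuI 0, MuI 1} \<union> {NoiseI i j | i j. i < 2 \<and> j < n i p})"
    and n_inf: "\<And>i. i < 2 \<Longrightarrow> filterlim (\<lambda>p. n i p) at_top sequentially"
    and nu_inf: "\<And>i. i < 2 \<Longrightarrow> filterlim (\<lambda>p. nu i p) at_top sequentially"
    and J_lim: "\<And>i. i < 2 \<Longrightarrow> (\<lambda>p. real p / real (n i p)) \<longlonglongrightarrow> J i"
    and J_nonneg: "\<And>i. i < 2 \<Longrightarrow> 0 \<le> J i"
    and gam_lim: "\<And>i. i < 2 \<Longrightarrow> (\<lambda>p. nu i p / real (n i p)) \<longlonglongrightarrow> gam i"
    and gam_pos: "\<And>i. i < 2 \<Longrightarrow> 0 < gam i"
    and m_conv: "\<And>i j. i < 2 \<Longrightarrow> j < 2 \<Longrightarrow> convergent (\<lambda>p. qf p (Sinv p) (m i p) (m j p))"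
    and Dbar: "(\<lambda>p. qf p (Sinv p) (\<lambda>k. m 0 p k - m 1 p k) (\<lambda>k. m 0 p k - m 1 p k)) \<longlonglongrightarrow> Dbar2"
    and F_pos: "Dbar2 + J 0 + J 1 + J 0 / gam 0 + J 1 / gam 1 > 0"
begin

sublocale cipl M by (rule cipl.intro) (rule prob)

definition "V p = (\<lambda>r \<omega>. case r of MuI i \<Rightarrow> mu p i \<omega>
                     | NoiseI i j \<Rightarrow> restrict (\<lambda>k. X p i j \<omega> k - mu p i \<omega> k) {..<p})"
definition "Nz i p j \<omega> = restrict (\<lambda>k. X p i j \<omega> k - mu p i \<omega> k) {..<p}"
definition "W i p \<omega> = restrict (\<lambda>k. mu p i \<omega> k - m i p k) {..<p}"
definition "Z i p \<omega> = restrict (\<lambda>k. (\<Sum>j<n i p. Nz i p j \<omega> k) / real (n i p)) {..<p}"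

lemma matinv: "matinv p (Sig p) (Sinv p)"
  by (rule matinv.intro) (fact Sig_sym, fact Sinv_r, fact Sinv_l)

lemma mu_meas: "i < 2 \<Longrightarrow> mu p i \<in> measurable (M p) (PiM {..<p} (\<lambda>_. borel))"
  using mu_law by (simp add: mvn_def)
lemma mu_comp[measurable]: "i < 2 \<Longrightarrow> k < p \<Longrightarrow> (\<lambda>\<omega>. mu p i \<omega> k) \<in> borel_measurable (M p)"
  using measurable_compose[OF mu_meas measurable_component_singleton[of k "{..<p}" "\<lambda>_. borel"]] by simp
lemma Nz_meas: "i < 2 \<Longrightarrow> j < n i p \<Longrightarrow> Nz i p j \<in> measurable (M p) (PiM {..<p} (\<lambda>_. borel))"
  using noise_law unfolding Nz_def by (simp add: mvn_def)
lemma Nz_comp: "i < 2 \<Longrightarrow> j < n i p \<Longrightarrow> k < p \<Longrightarrow> (\<lambda>\<omega>. Nz i p j \<omega> k) \<in> borel_measurable (M p)"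
  using measurable_compose[OF Nz_meas measurable_component_singleton[of k "{..<p}" "\<lambda>_. borel"]] by simp
lemma X_comp: "i < 2 \<Longrightarrow> j < n i p \<Longrightarrow> k < p \<Longrightarrow> (\<lambda>\<omega>. X p i j \<omega> k) \<in> borel_measurable (M p)"
proof -
  assume a: "i < 2" "j < n i p" "k < p"
  have "(\<lambda>\<omega>. X p i j \<omega> k) = (\<lambda>\<omega>. Nz i p j \<omega> k + mu p i \<omega> k)"
    using a by (simp add: Nz_def)
  then show ?thesis using Nz_comp[OF a] mu_comp[OF a(1,3)] by simp
qed

lemma W_meas: "i < 2 \<Longrightarrow> W i p \<in> measurable (M p) (PiM {..<p} (\<lambda>_. borel))"
  unfolding W_def by (intro measurable_restrict) simp
lemma Z_meas: "i < 2 \<Longrightarrow> Z i p \<in> measurable (M p) (PiM {..<p} (\<lambda>_. borel))"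
  unfolding Z_def
  by (intro measurable_restrict borel_measurable_divide borel_measurable_sum Nz_comp measurable_const) auto

lemma W_mvn: "i < 2 \<Longrightarrow> mvn (M p) p (W i p) (\<lambda>_. 0) (\<lambda>k l. Sig p k l / nu i p)"
  unfolding mvn_def
proof (intro conjI allI impI W_meas)
  fix a :: "nat \<Rightarrow> real" assume i: "i < 2" and a: "\<exists>k<p. a k \<noteq> 0"
  interpret prob_space "M p" by (rule prob)
  have D: "distributed (M p) lborel (\<lambda>\<omega>. \<Sum>k<p. a k * mu p i \<omega> k)
      (normal_density (\<Sum>k<p. a k * m i p k) (sqrt (qf p (\<lambda>k l. Sig p k l / nu i p) a a)))"
    using mu_law[OF i] a unfolding mvn_def by blast
  have pos: "0 < sqrt (qf p (\<lambda>k l. Sig p k l / nu i p) a a)"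
    using Sig_pd[OF a] nu_pos[OF i] by (simp add: qf_div_mat)
  have "distributed (M p) lborel (\<lambda>\<omega>. (- (\<Sum>k<p. a k * m i p k)) + 1 * (\<Sum>k<p. a k * mu p i \<omega> k))
      (normal_density ((- (\<Sum>k<p. a k * m i p k)) + 1 * (\<Sum>k<p. a k * m i p k)) (\<bar>1\<bar> * sqrt (qf p (\<lambda>k l. Sig p k l / nu i p) a a)))"
    by (rule normal_density_affine[OF D pos]) simp
  moreover have "(\<lambda>\<omega>. (- (\<Sum>k<p. a k * m i p k)) + 1 * (\<Sum>k<p. a k * mu p i \<omega> k)) = (\<lambda>\<omega>. \<Sum>k<p. a k * W i p \<omega> k)"
    by (auto simp: W_def sum_subtractf[symmetric] algebra_simps intro!: sum.cong)
  ultimately show "distributed (M p) lborel (\<lambda>\<omega>. \<Sum>k<p. a k * W i p \<omega> k)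
      (normal_density (\<Sum>k<p. a k * 0) (sqrt (qf p (\<lambda>k l. Sig p k l / nu i p) a a)))"
    by simp
qed


lemma V_indep: "prob_space.indep_vars (M p) (\<lambda>_. PiM {..<p} (\<lambda>_. borel)) (V p)
                   ({MuI 0, MuI 1} \<union> {NoiseI i j | i j. i < 2 \<and> j < n i p})"
  using indep[of p] unfolding V_def .

lemma Z_mvn: "i < 2 \<Longrightarrow> 0 < n i p \<Longrightarrow> mvn (M p) p (Z i p) (\<lambda>_. 0) (\<lambda>k l. Sig p k l / real (n i p))"
  unfolding mvn_def
proof (intro conjI allI impI Z_meas)
  fix a :: "nat \<Rightarrow> real" assume i: "i < 2" and np: "0 < n i p" and a: "\<exists>k<p. a k \<noteq> 0"
  interpret prob_space "M p" by (rule prob)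
  define I where "I = NoiseI i ` {..<n i p}"
  define Y where "Y = (\<lambda>r \<omega>. \<Sum>k<p. a k * V p r \<omega> k)"
  define q where "q = qf p (Sig p) a a"
  have q: "q > 0" using Sig_pd[OF a] by (simp add: q_def)
  have I_sub: "I \<subseteq> {MuI 0, MuI 1} \<union> {NoiseI i j | i j. i < 2 \<and> j < n i p}" using i by (auto simp: I_def)
  have indI: "indep_vars (\<lambda>_. borel) Y I"
  proof -
    have "indep_vars (\<lambda>_. borel) (\<lambda>r \<omega>. (\<lambda>f. lin p a f) (V p r \<omega>)) ({MuI 0, MuI 1} \<union> {NoiseI i j | i j. i < 2 \<and> j < n i p})"
      by (rule indep_vars_compose2[OF V_indep]) simp
    then show ?thesis unfolding Y_def lin_def by (rule indep_vars_subset[OF _ I_sub])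
  qed
  have YN: "Y (NoiseI i j) = (\<lambda>\<omega>. \<Sum>k<p. a k * Nz i p j \<omega> k)" for j
    by (simp add: Y_def V_def Nz_def)
  have dist: "distributed (M p) lborel (Y r) (normal_density 0 (sqrt q))" if r: "r \<in> I" for r
  proof -
    obtain j where j: "j < n i p" "r = NoiseI i j" using r by (auto simp: I_def)
    show ?thesis using noise_law[OF i j(1)] a unfolding mvn_def j(2) YN q_def Nz_def by simp
  qed
  have fin: "finite I" "I \<noteq> {}" using np by (auto simp: I_def)
  have S: "distributed (M p) lborel (\<lambda>\<omega>. \<Sum>r\<in>I. Y r \<omega>) (normal_density (\<Sum>r\<in>I. 0) (sqrt (\<Sum>r\<in>I. (sqrt q)\<^sup>2)))"
    by (rule sum_indep_normal[OF fin indI]) (use q dist in auto)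
  have cardI: "card I = n i p" unfolding I_def by (subst card_image) (auto simp: inj_on_def)
  have S': "distributed (M p) lborel (\<lambda>\<omega>. \<Sum>r\<in>I. Y r \<omega>) (normal_density 0 (sqrt (real (n i p) * q)))"
    using S q cardI by simp
  have pos: "0 < sqrt (real (n i p) * q)" using np q by simp
  have D: "distributed (M p) lborel (\<lambda>\<omega>. 0 + (1 / real (n i p)) * (\<Sum>r\<in>I. Y r \<omega>))
      (normal_density (0 + (1 / real (n i p)) * 0) (\<bar>1 / real (n i p)\<bar> * sqrt (real (n i p) * q)))"
    by (rule normal_density_affine[OF S' pos]) (use np in simp)
  have f: "(\<lambda>\<omega>. 0 + (1 / real (n i p)) * (\<Sum>r\<in>I. Y r \<omega>)) = (\<lambda>\<omega>. \<Sum>k<p. a k * Z i p \<omega> k)"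
  proof
    fix \<omega>
    have "(\<Sum>r\<in>I. Y r \<omega>) = (\<Sum>j<n i p. \<Sum>k<p. a k * Nz i p j \<omega> k)"
      unfolding I_def by (subst sum.reindex) (auto simp: inj_on_def YN)
    also have "\<dots> = (\<Sum>k<p. a k * (\<Sum>j<n i p. Nz i p j \<omega> k))"
      by (subst sum.swap) (simp add: sum_distrib_left)
    finally show "0 + (1 / real (n i p)) * (\<Sum>r\<in>I. Y r \<omega>) = (\<Sum>k<p. a k * Z i p \<omega> k)"
      by (simp add: Z_def sum_distrib_left sum_divide_distrib)
  qed
  have sd: "\<bar>1 / real (n i p)\<bar> * sqrt (real (n i p) * q) = sqrt (qf p (\<lambda>k l. Sig p k l / real (n i p)) a a)"
  proof -
    define N where "N = real (n i p)"
    have N: "N > 0" using np by (simp add: N_def)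
    have "\<bar>1 / N\<bar> * sqrt (N * q) = sqrt N * sqrt q / (sqrt N * sqrt N)"
      using N by (simp add: real_sqrt_mult)
    also have "\<dots> = sqrt q / sqrt N" using N by (simp add: field_simps)
    also have "\<dots> = sqrt (q / N)" by (simp add: real_sqrt_divide)
    finally have "\<bar>1 / real (n i p)\<bar> * sqrt (real (n i p) * q) = sqrt (q / real (n i p))" by (simp add: N_def)
    then show ?thesis by (simp add: qf_div_mat q_def)
  qed
  show "distributed (M p) lborel (\<lambda>\<omega>. \<Sum>k<p. a k * Z i p \<omega> k)
      (normal_density (\<Sum>k<p. a k * 0) (sqrt (qf p (\<lambda>k l. Sig p k l / real (n i p)) a a)))"
    using D unfolding f sd by simp
qed


abbreviation "PB p \<equiv> PiM {..<p} (\<lambda>_. borel :: real measure)"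
abbreviation "Iset p \<equiv> {MuI 0, MuI 1} \<union> {NoiseI i j | i j. i < 2 \<and> j < n i p}"

lemma gvec2_intro:
  assumes "mvn (M p) p Y (\<lambda>_. 0) (\<lambda>k l. Sig p k l / t)" "t > 0"
  shows "gvec2 (M p) p Y (\<lambda>k l. Sig p k l / t) (Sig p) (Sinv p) t"
proof (intro gvec2.intro gvec.intro gvec_axioms.intro gvec2_axioms.intro matinv prob assms refl)
  show "\<And>k l. k < p \<Longrightarrow> l < p \<Longrightarrow> Sig p k l / t = Sig p l k / t" using Sig_sym by simp
  show "\<And>b. \<exists>k<p. b k \<noteq> 0 \<Longrightarrow> 0 < qf p (\<lambda>k l. Sig p k l / t) b b"
    using Sig_pd assms(2) by (simp add: qf_div_mat)
qed

lemma gW: "i < 2 \<Longrightarrow> gvec2 (M p) p (W i p) (\<lambda>k l. Sig p k l / nu i p) (Sig p) (Sinv p) (nu i p)"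
  by (intro gvec2_intro W_mvn nu_pos)
lemma gZ: "i < 2 \<Longrightarrow> 0 < n i p \<Longrightarrow> gvec2 (M p) p (Z i p) (\<lambda>k l. Sig p k l / real (n i p)) (Sig p) (Sinv p) (real (n i p))"
  by (intro gvec2_intro Z_mvn) auto

lemma pair_indep:
  assumes AB: "A \<inter> B = {}" "A \<subseteq> Iset p" "B \<subseteq> Iset p"
    and TA: "TA \<in> measurable (PiM A (\<lambda>_. PB p)) (PB p)" and TB: "TB \<in> measurable (PiM B (\<lambda>_. PB p)) (PB p)"
    and G: "\<And>\<omega>. G \<omega> = TA (restrict (\<lambda>r. V p r \<omega>) A)" and H: "\<And>\<omega>. H \<omega> = TB (restrict (\<lambda>r. V p r \<omega>) B)"
  shows "prob_space.indep_var (M p) (PB p) G (PB p) H"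
proof -
  interpret prob_space "M p" by (rule prob)
  have "indep_var (PB p) (TA \<circ> (\<lambda>\<omega>. restrict (\<lambda>r. V p r \<omega>) A)) (PB p) (TB \<circ> (\<lambda>\<omega>. restrict (\<lambda>r. V p r \<omega>) B))"
    by (rule indep_var_compose[OF indep_var_restrict[OF V_indep AB] TA TB])
  moreover have "TA \<circ> (\<lambda>\<omega>. restrict (\<lambda>r. V p r \<omega>) A) = G" "TB \<circ> (\<lambda>\<omega>. restrict (\<lambda>r. V p r \<omega>) B) = H"
    using G H by (auto simp: fun_eq_iff)
  ultimately show ?thesis by simp
qed

definition "KW i = {MuI i}"
definition "TW i p = (\<lambda>f. restrict (\<lambda>k. f (MuI i) k - m i p k) {..<p})"
definition "KZ i p = NoiseI i ` {..<n i p}"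
definition "TZ i p = (\<lambda>f. restrict (\<lambda>k. (\<Sum>j<n i p. f (NoiseI i j) k) / real (n i p)) {..<p})"

lemma comp2: "a \<in> A \<Longrightarrow> k < p \<Longrightarrow> (\<lambda>f. f a k) \<in> borel_measurable (PiM A (\<lambda>_. PB p))"
  using measurable_compose[OF measurable_component_singleton[of a A "\<lambda>_. PB p"] measurable_component_singleton[of k "{..<p}" "\<lambda>_. borel"]]
  by simp

lemma TW_meas: "TW i p \<in> measurable (PiM (KW i) (\<lambda>_. PB p)) (PB p)"
  unfolding TW_def KW_def by (intro measurable_restrict borel_measurable_diff comp2 measurable_const) auto
lemma TZ_meas: "TZ i p \<in> measurable (PiM (KZ i p) (\<lambda>_. PB p)) (PB p)"
  unfolding TZ_def KZ_def by (intro measurable_restrict borel_measurable_divide borel_measurable_sum comp2 measurable_const) auto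
lemma W_T: "W i p \<omega> = TW i p (restrict (\<lambda>r. V p r \<omega>) (KW i))"
  by (simp add: W_def TW_def KW_def V_def)
lemma Z_T: "Z i p \<omega> = TZ i p (restrict (\<lambda>r. V p r \<omega>) (KZ i p))"
  unfolding Z_def TZ_def KZ_def by (intro ext) (auto simp: V_def Nz_def intro!: sum.cong)

lemma KW_sub: "i < 2 \<Longrightarrow> KW i \<subseteq> Iset p" by (auto simp: KW_def less_2_cases_iff)
lemma KZ_sub: "i < 2 \<Longrightarrow> KZ i p \<subseteq> Iset p" by (auto simp: KZ_def)

lemma indWW: "prob_space.indep_var (M p) (PB p) (W 0 p) (PB p) (W 1 p)"
  by (rule pair_indep[OF _ KW_sub KW_sub TW_meas TW_meas W_T W_T]) (auto simp: KW_def)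
lemma indWZ: "i < 2 \<Longrightarrow> j < 2 \<Longrightarrow> prob_space.indep_var (M p) (PB p) (W i p) (PB p) (Z j p)"
  by (rule pair_indep[OF _ KW_sub KZ_sub TW_meas TZ_meas W_T Z_T]) (auto simp: KW_def KZ_def)
lemma indZZ: "prob_space.indep_var (M p) (PB p) (Z 0 p) (PB p) (Z 1 p)"
  by (rule pair_indep[OF _ KZ_sub KZ_sub TZ_meas TZ_meas Z_T Z_T]) (auto simp: KZ_def)


lemma qf_meas: "(\<And>k. k < P \<Longrightarrow> (\<lambda>\<omega>. x \<omega> k) \<in> borel_measurable N) \<Longrightarrow> (\<And>k. k < P \<Longrightarrow> (\<lambda>\<omega>. y \<omega> k) \<in> borel_measurable N)
   \<Longrightarrow> (\<lambda>\<omega>. qf P A (x \<omega>) (y \<omega>)) \<in> borel_measurable N"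
  unfolding qf_def by (intro borel_measurable_sum borel_measurable_times measurable_const) auto

definition "rv G t \<longleftrightarrow> (\<forall>\<^sub>F p in sequentially. gvec2 (M p) p (G p) (\<lambda>k l. Sig p k l / t p) (Sig p) (Sinv p) (t p))"

lemma inv_lim: fixes t :: "nat \<Rightarrow> real" assumes "filterlim t at_top sequentially" shows "(\<lambda>p. 1 / t p) \<longlonglongrightarrow> 0"
  using tendsto_inverse_0_at_top[OF assms] by (simp add: inverse_eq_divide)

lemma leaf_det:
  assumes G: "rv G t" and t: "filterlim t at_top sequentially"
    and a: "convergent (\<lambda>p. qf p (Sinv p) (a p) (a p))"
  shows "cip M (\<lambda>p \<omega>. qf p (Sinv p) (a p) (G p \<omega>)) 0"
proof (rule cip_L2[where s="\<lambda>_. 0"])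
  show "\<forall>\<^sub>F p in sequentially. (\<lambda>\<omega>. qf p (Sinv p) (a p) (G p \<omega>)) \<in> borel_measurable (M p)"
    using G unfolding rv_def by eventually_elim (intro qf_meas measurable_const gvec.Ycomp gvec2.axioms(1), auto)
  show "\<forall>\<^sub>F p in sequentially. integrable (M p) (\<lambda>\<omega>. (qf p (Sinv p) (a p) (G p \<omega>) - 0)^2)"
    using G unfolding rv_def by eventually_elim (simp add: gvec2.A_var(1))
  have "(\<lambda>p. qf p (Sinv p) (a p) (a p) * (1 / t p)) \<longlonglongrightarrow> lim (\<lambda>p. qf p (Sinv p) (a p) (a p)) * 0"
    by (intro tendsto_mult inv_lim t a[unfolded convergent_LIMSEQ_iff])
  moreover have "\<forall>\<^sub>F p in sequentially. qf p (Sinv p) (a p) (a p) * (1 / t p) = integral\<^sup>L (M p) (\<lambda>\<omega>. (qf p (Sinv p) (a p) (G p \<omega>) - 0)^2)"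
    using G unfolding rv_def by eventually_elim (simp add: gvec2.A_var(2))
  ultimately show "(\<lambda>p. integral\<^sup>L (M p) (\<lambda>\<omega>. (qf p (Sinv p) (a p) (G p \<omega>) - 0)^2)) \<longlonglongrightarrow> 0"
    by (simp add: Lim_transform_eventually)
qed simp

lemma leaf_self:
  assumes G: "rv G t" and t: "filterlim t at_top sequentially"
    and L: "(\<lambda>p. real p / t p) \<longlonglongrightarrow> L"
  shows "cip M (\<lambda>p \<omega>. qf p (Sinv p) (G p \<omega>) (G p \<omega>)) L"
proof (rule cip_L2[where s="\<lambda>p. real p / t p"])
  show "\<forall>\<^sub>F p in sequentially. (\<lambda>\<omega>. qf p (Sinv p) (G p \<omega>) (G p \<omega>)) \<in> borel_measurable (M p)"
    using G unfolding rv_def by eventually_elim (intro qf_meas gvec.Ycomp gvec2.axioms(1))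
  show "\<forall>\<^sub>F p in sequentially. integrable (M p) (\<lambda>\<omega>. (qf p (Sinv p) (G p \<omega>) (G p \<omega>) - real p / t p)^2)"
    using G unfolding rv_def by eventually_elim (rule gvec2.Q_var(1))
  have "(\<lambda>p. 2 * (real p / t p) * (1 / t p)) \<longlonglongrightarrow> 2 * L * 0"
    by (intro tendsto_mult inv_lim t L tendsto_const)
  moreover have "\<forall>\<^sub>F p in sequentially. 2 * (real p / t p) * (1 / t p) = integral\<^sup>L (M p) (\<lambda>\<omega>. (qf p (Sinv p) (G p \<omega>) (G p \<omega>) - real p / t p)^2)"
    using G unfolding rv_def by eventually_elim (subst gvec2.Q_var(2), assumption, simp add: power2_eq_square)
  ultimately show "(\<lambda>p. integral\<^sup>L (M p) (\<lambda>\<omega>. (qf p (Sinv p) (G p \<omega>) (G p \<omega>) - real p / t p)^2)) \<longlonglongrightarrow> 0"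
    by (simp add: Lim_transform_eventually)
qed (rule L)

lemma leaf_pair:
  assumes G: "rv G t" and H: "rv H s" and t: "filterlim t at_top sequentially" and s: "filterlim s at_top sequentially"
    and L: "(\<lambda>p. real p / t p) \<longlonglongrightarrow> L"
    and ind: "\<forall>\<^sub>F p in sequentially. prob_space.indep_var (M p) (PB p) (G p) (PB p) (H p)"
  shows "cip M (\<lambda>p \<omega>. qf p (Sinv p) (G p \<omega>) (H p \<omega>)) 0"
proof (rule cip_L2[where s="\<lambda>_. 0"])
  show "\<forall>\<^sub>F p in sequentially. (\<lambda>\<omega>. qf p (Sinv p) (G p \<omega>) (H p \<omega>)) \<in> borel_measurable (M p)"
    using eventually_conj[OF G[unfolded rv_def] H[unfolded rv_def]]
    by eventually_elim (intro qf_meas gvec.Ycomp gvec2.axioms(1), auto)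
  show "\<forall>\<^sub>F p in sequentially. integrable (M p) (\<lambda>\<omega>. (qf p (Sinv p) (G p \<omega>) (H p \<omega>) - 0)^2)"
    using eventually_conj[OF eventually_conj[OF G[unfolded rv_def] H[unfolded rv_def]] ind]
    by eventually_elim (elim conjE, simp add: indep_pair(1))
  have "(\<lambda>p. (real p / t p) * (1 / s p)) \<longlonglongrightarrow> L * 0"
    by (intro tendsto_mult inv_lim s L)
  moreover have "\<forall>\<^sub>F p in sequentially. (real p / t p) * (1 / s p) = integral\<^sup>L (M p) (\<lambda>\<omega>. (qf p (Sinv p) (G p \<omega>) (H p \<omega>) - 0)^2)"
    using eventually_conj[OF eventually_conj[OF G[unfolded rv_def] H[unfolded rv_def]] ind]
    by eventually_elim (auto simp: indep_pair(2))
  ultimately show "(\<lambda>p. integral\<^sup>L (M p) (\<lambda>\<omega>. (qf p (Sinv p) (G p \<omega>) (H p \<omega>) - 0)^2)) \<longlonglongrightarrow> 0"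
    by (simp add: Lim_transform_eventually)
qed simp


lemma n_real_inf: "i < 2 \<Longrightarrow> filterlim (\<lambda>p. real (n i p)) at_top sequentially"
  using filterlim_compose[OF filterlim_real_sequentially n_inf] by (simp add: o_def)

lemma n_pos_ev: "i < 2 \<Longrightarrow> \<forall>\<^sub>F p in sequentially. 0 < n i p"
  using filterlim_at_top[THEN iffD1, OF n_inf, of i, rule_format, of 1] by (auto elim: eventually_mono)

lemma rvW: "i < 2 \<Longrightarrow> rv (W i) (nu i)"
  unfolding rv_def using gW by simp
lemma rvZ: assumes i: "i < 2" shows "rv (Z i) (\<lambda>p. real (n i p))"
  unfolding rv_def using n_pos_ev[OF i] by (rule eventually_mono) (rule gZ[OF i])

lemma pnu_lim: "i < 2 \<Longrightarrow> (\<lambda>p. real p / nu i p) \<longlonglongrightarrow> J i / gam i"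
proof -
  assume i: "i < 2"
  have "(\<lambda>p. (real p / real (n i p)) / (nu i p / real (n i p))) \<longlonglongrightarrow> J i / gam i"
    using gam_pos[OF i] by (intro tendsto_divide J_lim gam_lim i) auto
  moreover have "\<forall>\<^sub>F p in sequentially. (real p / real (n i p)) / (nu i p / real (n i p)) = real p / nu i p"
    using n_pos_ev[OF i] by eventually_elim simp
  ultimately show ?thesis by (rule Lim_transform_eventually)
qed

lemma qfS_sym: "qf p (Sinv p) x y = qf p (Sinv p) y x"
  by (rule qf_sym) (rule matinv.Ssym[OF matinv])

definition "lm i j = lim (\<lambda>p. qf p (Sinv p) (m i p) (m j p))"

lemma leaf_mm: "i < 2 \<Longrightarrow> j < 2 \<Longrightarrow> cip M (\<lambda>p \<omega>. qf p (Sinv p) (m i p) (m j p)) (lm i j)"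
  unfolding lm_def by (intro cip_const) (simp add: m_conv convergent_LIMSEQ_iff[symmetric])

lemma cip_swap: "cip M (\<lambda>p \<omega>. qf p (Sinv p) (x p \<omega>) (y p \<omega>)) c \<Longrightarrow> cip M (\<lambda>p \<omega>. qf p (Sinv p) (y p \<omega>) (x p \<omega>)) c"
  by (erule cip_cong) (auto simp: qfS_sym)

lemma leaf_mW: "i < 2 \<Longrightarrow> j < 2 \<Longrightarrow> cip M (\<lambda>p \<omega>. qf p (Sinv p) (m i p) (W j p \<omega>)) 0"
  by (intro leaf_det[OF rvW nu_inf] m_conv)
lemma leaf_mZ: "i < 2 \<Longrightarrow> j < 2 \<Longrightarrow> cip M (\<lambda>p \<omega>. qf p (Sinv p) (m i p) (Z j p \<omega>)) 0"
  by (intro leaf_det[OF rvZ n_real_inf] m_conv)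
lemma leaf_WW: "i < 2 \<Longrightarrow> cip M (\<lambda>p \<omega>. qf p (Sinv p) (W i p \<omega>) (W i p \<omega>)) (J i / gam i)"
  by (intro leaf_self[OF rvW nu_inf] pnu_lim)
lemma leaf_ZZ: "i < 2 \<Longrightarrow> cip M (\<lambda>p \<omega>. qf p (Sinv p) (Z i p \<omega>) (Z i p \<omega>)) (J i)"
  by (intro leaf_self[OF rvZ n_real_inf] J_lim)
lemma leaf_W01: "cip M (\<lambda>p \<omega>. qf p (Sinv p) (W 0 p \<omega>) (W 1 p \<omega>)) 0"
  by (intro leaf_pair[OF rvW rvW nu_inf nu_inf pnu_lim] always_eventually allI indWW) auto
lemma leaf_WZ: "i < 2 \<Longrightarrow> j < 2 \<Longrightarrow> cip M (\<lambda>p \<omega>. qf p (Sinv p) (W i p \<omega>) (Z j p \<omega>)) 0"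
  by (intro leaf_pair[OF rvW rvZ nu_inf n_real_inf pnu_lim] always_eventually allI indWZ)
lemma leaf_Z01: "cip M (\<lambda>p \<omega>. qf p (Sinv p) (Z 0 p \<omega>) (Z 1 p \<omega>)) 0"
  by (intro leaf_pair[OF rvZ rvZ n_real_inf n_real_inf J_lim] always_eventually allI indZZ) auto

definition "Bv i p \<omega> = (if i = 0 then m 0 p else if i = 1 then m 1 p else if i = 2 then W 0 p \<omega>
   else if i = 3 then W 1 p \<omega> else if i = 4 then Z 0 p \<omega> else Z 1 p \<omega>)"
definition "Lt i j = (if i < 2 \<and> j < 2 then lm i j else if i = j then
   (if i = 2 then J 0 / gam 0 else if i = 3 then J 1 / gam 1 else if i = 4 then J 0 else J 1) else 0)"

lemma leaf_all: "i < 6 \<Longrightarrow> j < 6 \<Longrightarrow> cip M (\<lambda>p \<omega>. qf p (Sinv p) (Bv i p \<omega>) (Bv j p \<omega>)) (Lt i j)"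
proof -
  assume i: "i < 6" and j: "j < 6"
  have mW: "cip M (\<lambda>p \<omega>. qf p (Sinv p) (W j p \<omega>) (m i p)) 0" if "i < 2" "j < 2" for i j
    using cip_swap[OF leaf_mW[OF that]] .
  have mZ: "cip M (\<lambda>p \<omega>. qf p (Sinv p) (Z j p \<omega>) (m i p)) 0" if "i < 2" "j < 2" for i j
    using cip_swap[OF leaf_mZ[OF that]] .
  have ZW: "cip M (\<lambda>p \<omega>. qf p (Sinv p) (Z j p \<omega>) (W i p \<omega>)) 0" if "i < 2" "j < 2" for i j
    using cip_swap[OF leaf_WZ[OF that]] .
  have W10: "cip M (\<lambda>p \<omega>. qf p (Sinv p) (W 1 p \<omega>) (W 0 p \<omega>)) 0" using cip_swap[OF leaf_W01] .
  have Z10: "cip M (\<lambda>p \<omega>. qf p (Sinv p) (Z 1 p \<omega>) (Z 0 p \<omega>)) 0" using cip_swap[OF leaf_Z01] .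
  have "i \<in> {0,1,2,3,4,5}" "j \<in> {0,1,2,3,4,5}" using i j by auto
  then show ?thesis
    apply (auto simp: Bv_def Lt_def One_nat_def)
    apply ((rule leaf_mm; simp) | (rule leaf_mW; simp) | (rule leaf_mZ; simp)
      | (rule leaf_WW; simp) | (rule leaf_ZZ; simp) | (rule leaf_WZ; simp)
      | (rule mW; simp) | (rule mZ; simp) | (rule ZW; simp)
      | rule leaf_W01[simplified One_nat_def] | rule leaf_Z01[simplified One_nat_def]
      | rule W10[simplified One_nat_def] | rule Z10[simplified One_nat_def])+
    done
qed

end


lemma sum6: "(\<Sum>i<6. f i) = f 0 + f 1 + f 2 + f 3 + f (4::nat) + (f 5 :: real)"
  by (simp add: eval_nat_numeral)

context model begin

lemma xbar_eq: "i < 2 \<Longrightarrow> 0 < n i p \<Longrightarrow> k < p \<Longrightarrow>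
   smean (n i p) (\<lambda>j. X p i j \<omega>) k = m i p k + W i p \<omega> k + Z i p \<omega> k"
proof -
  assume i: "i < 2" and np: "0 < n i p" and k: "k < p"
  have "(\<Sum>j<n i p. Nz i p j \<omega> k) = (\<Sum>j<n i p. X p i j \<omega> k) - real (n i p) * mu p i \<omega> k"
    using k by (simp add: Nz_def sum_subtractf)
  then show ?thesis using k np
    by (simp add: smean_def W_def Z_def field_simps)
qed

lemma mu_eq: "k < p \<Longrightarrow> mu p i \<omega> k = m i p k + W i p \<omega> k"
  by (simp add: W_def)

definition "comb c p \<omega> = (\<lambda>k. \<Sum>i<(6::nat). c i * Bv i p \<omega> k)"

lemma comb_qf: "qf p (Sinv p) (comb c p \<omega>) (comb d p \<omega>) = (\<Sum>i<(6::nat). \<Sum>j<(6::nat). c i * d j * qf p (Sinv p) (Bv i p \<omega>) (Bv j p \<omega>))"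
  unfolding comb_def by (rule qf_lincomb)

lemma comb_eval: "comb c p \<omega> k = c 0 * m 0 p k + c 1 * m 1 p k + c 2 * W 0 p \<omega> k + c 3 * W 1 p \<omega> k + c 4 * Z 0 p \<omega> k + c 5 * Z 1 p \<omega> k"
  unfolding comb_def sum6 by (simp add: Bv_def)

definition "sg i p = real (n i p) / (real (n i p) + nu i p)"

definition "cd = (\<lambda>i. [1,-1,1,-1,1,-1::real] ! i)"
definition "cP0 = (\<lambda>i. [1/2,-1/2,1/2,-1/2,-1/2,-1/2::real] ! i)"
definition "cP1 = (\<lambda>i. [-1/2,1/2,-1/2,1/2,-1/2,-1/2::real] ! i)"
definition "cQ0 p = (\<lambda>i. [1/2,-1/2,sg 0 p - 1/2,-1/2,sg 0 p - 1/2,-1/2::real] ! i)"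
definition "cQ1 p = (\<lambda>i. [-1/2,1/2,-1/2,sg 1 p - 1/2,-1/2,sg 1 p - 1/2::real] ! i)"

lemma sg_lim: "i < 2 \<Longrightarrow> sg i \<longlonglongrightarrow> 1 / (1 + gam i)"
proof -
  assume i: "i < 2"
  have "(\<lambda>p. 1 / (1 + nu i p / real (n i p))) \<longlonglongrightarrow> 1 / (1 + gam i)"
    using gam_pos[OF i] by (intro tendsto_divide tendsto_add tendsto_const gam_lim i) auto
  moreover have "\<forall>\<^sub>F p in sequentially. 1 / (1 + nu i p / real (n i p)) = sg i p"
    using n_pos_ev[OF i] by eventually_elim (simp add: sg_def field_simps)
  ultimately show ?thesis by (rule Lim_transform_eventually)
qed


lemma cip_comb:
  assumes c: "\<And>i. i < 6 \<Longrightarrow> (\<lambda>p. c p i) \<longlonglongrightarrow> \<alpha> i" and d: "\<And>j. j < 6 \<Longrightarrow> (\<lambda>p. d p j) \<longlonglongrightarrow> \<beta> j"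
  shows "cip M (\<lambda>p \<omega>. qf p (Sinv p) (comb (c p) p \<omega>) (comb (d p) p \<omega>)) (\<Sum>i<(6::nat). \<Sum>j<(6::nat). \<alpha> i * \<beta> j * Lt i j)"
  unfolding comb_qf by (rule cip_bilin[OF leaf_all c d])

lemma Dbar_eq: "Dbar2 = lm 0 0 - lm 0 1 - lm 1 0 + lm 1 1"
proof -
  have l: "(\<lambda>p. qf p (Sinv p) (m i p) (m j p)) \<longlonglongrightarrow> lm i j" if "i < 2" "j < 2" for i j
    unfolding lm_def using m_conv[OF that] by (simp add: convergent_LIMSEQ_iff)
  have "(\<lambda>p. qf p (Sinv p) (m 0 p) (m 0 p) - qf p (Sinv p) (m 0 p) (m 1 p) - (qf p (Sinv p) (m 1 p) (m 0 p) - qf p (Sinv p) (m 1 p) (m 1 p)))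
     \<longlonglongrightarrow> lm 0 0 - lm 0 1 - (lm 1 0 - lm 1 1)"
    by (intro tendsto_diff l) auto
  moreover have "(\<lambda>p. qf p (Sinv p) (m 0 p) (m 0 p) - qf p (Sinv p) (m 0 p) (m 1 p) - (qf p (Sinv p) (m 1 p) (m 0 p) - qf p (Sinv p) (m 1 p) (m 1 p)))
     = (\<lambda>p. qf p (Sinv p) (\<lambda>k. m 0 p k - m 1 p k) (\<lambda>k. m 0 p k - m 1 p k))"
    by (simp add: qf_diff_left qf_diff_right)
  ultimately have "(\<lambda>p. qf p (Sinv p) (\<lambda>k. m 0 p k - m 1 p k) (\<lambda>k. m 0 p k - m 1 p k)) \<longlonglongrightarrow> lm 0 0 - lm 0 1 - (lm 1 0 - lm 1 1)"
    by simp
  from LIMSEQ_unique[OF Dbar this] show ?thesis by simp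
qed

abbreviation "FF \<equiv> Dbar2 + J 0 + J 1 + J 0 / gam 0 + J 1 / gam 1"

lemma Lt_sum: "(\<Sum>i<(6::nat). \<Sum>j<(6::nat). \<alpha> i * \<beta> j * Lt i j) =
   \<alpha> 0 * \<beta> 0 * lm 0 0 + \<alpha> 0 * \<beta> 1 * lm 0 1 + \<alpha> 1 * \<beta> 0 * lm 1 0 + \<alpha> 1 * \<beta> 1 * lm 1 1
   + \<alpha> 2 * \<beta> 2 * (J 0 / gam 0) + \<alpha> 3 * \<beta> 3 * (J 1 / gam 1) + \<alpha> 4 * \<beta> 4 * J 0 + \<alpha> 5 * \<beta> 5 * J 1"
  by (simp add: sum6 Lt_def)

lemma const_lim: "(\<lambda>p. c i) \<longlonglongrightarrow> c i" by simp

lemma cip_D: "cip M (\<lambda>p \<omega>. qf p (Sinv p) (comb cd p \<omega>) (comb cd p \<omega>)) FF"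
proof -
  have "cip M (\<lambda>p \<omega>. qf p (Sinv p) (comb cd p \<omega>) (comb cd p \<omega>)) (\<Sum>i<(6::nat). \<Sum>j<(6::nat). cd i * cd j * Lt i j)"
    by (rule cip_comb) simp_all
  moreover have "(\<Sum>i<(6::nat). \<Sum>j<(6::nat). cd i * cd j * Lt i j) = FF"
    unfolding Lt_sum by (simp add: cd_def cP0_def cP1_def Dbar_eq field_simps)
  ultimately show ?thesis by simp
qed

lemma cip_P0: "cip M (\<lambda>p \<omega>. qf p (Sinv p) (comb cP0 p \<omega>) (comb cd p \<omega>)) (FF / 2 - J 0)"
proof -
  have "cip M (\<lambda>p \<omega>. qf p (Sinv p) (comb cP0 p \<omega>) (comb cd p \<omega>)) (\<Sum>i<(6::nat). \<Sum>j<(6::nat). cP0 i * cd j * Lt i j)"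
    by (rule cip_comb) simp_all
  moreover have "(\<Sum>i<(6::nat). \<Sum>j<(6::nat). cP0 i * cd j * Lt i j) = FF / 2 - J 0"
    unfolding Lt_sum by (simp add: cd_def cP0_def cP1_def Dbar_eq field_simps)
  ultimately show ?thesis by simp
qed

lemma cip_P1: "cip M (\<lambda>p \<omega>. qf p (Sinv p) (comb cP1 p \<omega>) (comb cd p \<omega>)) (- FF / 2 + J 1)"
proof -
  have "cip M (\<lambda>p \<omega>. qf p (Sinv p) (comb cP1 p \<omega>) (comb cd p \<omega>)) (\<Sum>i<(6::nat). \<Sum>j<(6::nat). cP1 i * cd j * Lt i j)"
    by (rule cip_comb) simp_all
  moreover have "(\<Sum>i<(6::nat). \<Sum>j<(6::nat). cP1 i * cd j * Lt i j) = - FF / 2 + J 1"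
    unfolding Lt_sum by (simp add: cd_def cP0_def cP1_def Dbar_eq field_simps)
  ultimately show ?thesis by simp
qed

lemma cQ0_lim: "i < 6 \<Longrightarrow> (\<lambda>p. cQ0 p i) \<longlonglongrightarrow> [1/2,-1/2,1 / (1 + gam 0) - 1/2,-1/2,1 / (1 + gam 0) - 1/2,-1/2::real] ! i"
proof -
  assume "i < 6"
  then have "i \<in> {0,1,2,3,4,5}" by auto
  then show ?thesis using sg_lim[of 0] by (auto simp: cQ0_def intro!: tendsto_diff)
qed
lemma cQ1_lim: "i < 6 \<Longrightarrow> (\<lambda>p. cQ1 p i) \<longlonglongrightarrow> [-1/2,1/2,-1/2,1 / (1 + gam 1) - 1/2,-1/2,1 / (1 + gam 1) - 1/2::real] ! i"
proof -
  assume "i < 6"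
  then have "i \<in> {0,1,2,3,4,5}" by auto
  then show ?thesis using sg_lim[of 1] by (auto simp: cQ1_def intro!: tendsto_diff)
qed

lemma aux: assumes g: "(g::real) > 0" shows "(1 / (1 + g) - 1/2) * (j / g) + (1 / (1 + g) - 1/2) * j = j / g / 2 - j / 2"
proof -
  have gg: "g * g > 0" using g by simp
  have h: "1 + g \<noteq> 0" "g \<noteq> 0" "g + g * g \<noteq> 0" using g gg by linarith+
  have e1: "j/g + j = j*(1+g)/g" using h by (simp add: field_simps)
  have e2: "1/(1+g) * (j*(1+g)/g) = j/g" using h by simp
  have gen2: "\<And>a j::real. a - (a + j)/2 = a/2 - j/2" by (simp add: field_simps)
  have gen: "\<And>u a j::real. (u - 1/2)*a + (u-1/2)*j = u*(a+j) - (a+j)/2" by (simp add: algebra_simps)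
  have "(1 / (1 + g) - 1/2) * (j / g) + (1 / (1 + g) - 1/2) * j = 1/(1+g) * (j/g + j) - (j/g + j)/2"
    by (rule gen)
  also have "\<dots> = j/g - (j/g + j)/2" unfolding e1 e2 by (simp add: e1[symmetric])
  also have "\<dots> = j / g / 2 - j / 2" by (rule gen2)
  finally show ?thesis .
qed

lemma lin1: "(x::real) + a + y + b + z = x + (a + b) + y + z" by simp
lemma lin2: "(x::real) - y - a - z - b = x - y - z - (a + b)" by simp

lemma sumQ0: "(\<Sum>i<(6::nat). \<Sum>j<(6::nat). [1/2,-1/2,s - 1/2,-1/2,s - 1/2,-1/2::real] ! i * cd j * Lt i j)
   = Dbar2 / 2 + (s - 1/2) * (J 0 / gam 0) + J 1 / gam 1 / 2 + (s - 1/2) * J 0 + J 1 / 2"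
  unfolding Lt_sum using gam_pos[of 0] gam_pos[of 1] by (simp add: cd_def Dbar_eq field_simps)
lemma sumQ1: "(\<Sum>i<(6::nat). \<Sum>j<(6::nat). [-1/2,1/2,-1/2,s - 1/2,-1/2,s - 1/2::real] ! i * cd j * Lt i j)
   = - Dbar2 / 2 - J 0 / gam 0 / 2 - (s - 1/2) * (J 1 / gam 1) - J 0 / 2 - (s - 1/2) * J 1"
  unfolding Lt_sum using gam_pos[of 0] gam_pos[of 1] by (simp add: cd_def Dbar_eq field_simps)

lemma cip_Q0: "cip M (\<lambda>p \<omega>. qf p (Sinv p) (comb (cQ0 p) p \<omega>) (comb cd p \<omega>)) (FF / 2 - J 0)"
proof -
  have g: "gam 0 > 0" using gam_pos by simp
  then have g2: "1 + gam 0 \<noteq> 0" "gam 0 \<noteq> 0" by auto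
  have "cip M (\<lambda>p \<omega>. qf p (Sinv p) (comb (cQ0 p) p \<omega>) (comb cd p \<omega>))
     (\<Sum>i<(6::nat). \<Sum>j<(6::nat). [1/2,-1/2,1 / (1 + gam 0) - 1/2,-1/2,1 / (1 + gam 0) - 1/2,-1/2::real] ! i * cd j * Lt i j)"
    by (rule cip_comb[OF cQ0_lim]) simp_all
  moreover have "(\<Sum>i<(6::nat). \<Sum>j<(6::nat). [1/2,-1/2,1 / (1 + gam 0) - 1/2,-1/2,1 / (1 + gam 0) - 1/2,-1/2::real] ! i * cd j * Lt i j) = FF / 2 - J 0"
    unfolding sumQ0 lin1 aux[OF g] using gam_pos[of 1] by (simp add: field_simps)
  ultimately show ?thesis by simp
qed

lemma cip_Q1: "cip M (\<lambda>p \<omega>. qf p (Sinv p) (comb (cQ1 p) p \<omega>) (comb cd p \<omega>)) (- FF / 2 + J 1)"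
proof -
  have g: "gam 1 > 0" using gam_pos by simp
  then have g2: "1 + gam 1 \<noteq> 0" "gam 1 \<noteq> 0" by auto
  have "cip M (\<lambda>p \<omega>. qf p (Sinv p) (comb (cQ1 p) p \<omega>) (comb cd p \<omega>))
     (\<Sum>i<(6::nat). \<Sum>j<(6::nat). [-1/2,1/2,-1/2,1 / (1 + gam 1) - 1/2,-1/2,1 / (1 + gam 1) - 1/2::real] ! i * cd j * Lt i j)"
    by (rule cip_comb[OF cQ1_lim]) simp_all
  moreover have "(\<Sum>i<(6::nat). \<Sum>j<(6::nat). [-1/2,1/2,-1/2,1 / (1 + gam 1) - 1/2,-1/2,1 / (1 + gam 1) - 1/2::real] ! i * cd j * Lt i j) = - FF / 2 + J 1"
    unfolding sumQ1 lin2 aux[OF g] using gam_pos[of 0] by (simp add: field_simps)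
  ultimately show ?thesis by simp
qed


abbreviation "xb i p \<omega> \<equiv> smean (n i p) (\<lambda>j. X p i j \<omega>)"

lemma V_d: "0 < n 0 p \<Longrightarrow> 0 < n 1 p \<Longrightarrow> k < p \<Longrightarrow> xb 0 p \<omega> k - xb 1 p \<omega> k = comb cd p \<omega> k"
  by (simp add: comb_eval xbar_eq cd_def)
lemma V_P0: "0 < n 0 p \<Longrightarrow> 0 < n 1 p \<Longrightarrow> k < p \<Longrightarrow> mu p 0 \<omega> k - (xb 0 p \<omega> k + xb 1 p \<omega> k) / 2 = comb cP0 p \<omega> k"
  by (simp add: comb_eval xbar_eq mu_eq cP0_def field_simps)
lemma V_P1: "0 < n 0 p \<Longrightarrow> 0 < n 1 p \<Longrightarrow> k < p \<Longrightarrow> mu p 1 \<omega> k - (xb 0 p \<omega> k + xb 1 p \<omega> k) / 2 = comb cP1 p \<omega> k"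
  by (simp add: comb_eval xbar_eq mu_eq cP1_def field_simps)
lemma V_Q0: "0 < n 0 p \<Longrightarrow> 0 < n 1 p \<Longrightarrow> k < p \<Longrightarrow>
   (real (n 0 p) * xb 0 p \<omega> k + nu 0 p * m 0 p k) / (real (n 0 p) + nu 0 p) - (xb 0 p \<omega> k + xb 1 p \<omega> k) / 2 = comb (cQ0 p) p \<omega> k"
proof -
  assume a: "0 < n 0 p" "0 < n 1 p" "k < p"
  have pos: "real (n 0 p) + nu 0 p \<noteq> 0" using a nu_pos[of 0 p] by simp
  have key: "(real (n 0 p) * (m 0 p k + W 0 p \<omega> k + Z 0 p \<omega> k) + nu 0 p * m 0 p k) / (real (n 0 p) + nu 0 p)
      = m 0 p k + sg 0 p * (W 0 p \<omega> k + Z 0 p \<omega> k)"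
    using pos by (simp add: sg_def field_simps)
  have x0: "xb 0 p \<omega> k = m 0 p k + W 0 p \<omega> k + Z 0 p \<omega> k" using xbar_eq[of 0 p k \<omega>] a by simp
  have x1: "xb 1 p \<omega> k = m 1 p k + W 1 p \<omega> k + Z 1 p \<omega> k" using xbar_eq[of 1 p k \<omega>] a by simp
  show ?thesis unfolding x0 x1 key
    by (simp add: comb_eval cQ0_def field_simps)
qed
lemma V_Q1: "0 < n 0 p \<Longrightarrow> 0 < n 1 p \<Longrightarrow> k < p \<Longrightarrow>
   (real (n 1 p) * xb 1 p \<omega> k + nu 1 p * m 1 p k) / (real (n 1 p) + nu 1 p) - (xb 0 p \<omega> k + xb 1 p \<omega> k) / 2 = comb (cQ1 p) p \<omega> k"
proof -
  assume a: "0 < n 0 p" "0 < n 1 p" "k < p"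
  have pos: "real (n 1 p) + nu 1 p \<noteq> 0" using a nu_pos[of 1 p] by simp
  have key: "(real (n 1 p) * (m 1 p k + W 1 p \<omega> k + Z 1 p \<omega> k) + nu 1 p * m 1 p k) / (real (n 1 p) + nu 1 p)
      = m 1 p k + sg 1 p * (W 1 p \<omega> k + Z 1 p \<omega> k)"
    using pos by (simp add: sg_def field_simps)
  have x0: "xb 0 p \<omega> k = m 0 p k + W 0 p \<omega> k + Z 0 p \<omega> k" using xbar_eq[of 0 p k \<omega>] a by simp
  have x1: "xb 1 p \<omega> k = m 1 p k + W 1 p \<omega> k + Z 1 p \<omega> k" using xbar_eq[of 1 p k \<omega>] a by simp
  show ?thesis unfolding x0 x1 key
    by (simp add: comb_eval cQ1_def field_simps)
qed

abbreviation "Dq p \<omega> \<equiv> qf p (Sinv p) (comb cd p \<omega>) (comb cd p \<omega>)"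
abbreviation "Pq0 p \<omega> \<equiv> qf p (Sinv p) (comb cP0 p \<omega>) (comb cd p \<omega>)"
abbreviation "Pq1 p \<omega> \<equiv> qf p (Sinv p) (comb cP1 p \<omega>) (comb cd p \<omega>)"
abbreviation "Qq0 p \<omega> \<equiv> qf p (Sinv p) (comb (cQ0 p) p \<omega>) (comb cd p \<omega>)"
abbreviation "Qq1 p \<omega> \<equiv> qf p (Sinv p) (comb (cQ1 p) p \<omega>) (comb cd p \<omega>)"
abbreviation "cc \<equiv> ln ((1 - a0) / a0)"

lemma eps_eq: "0 < n 0 p \<Longrightarrow> 0 < n 1 p \<Longrightarrow>
  true_err p (Sinv p) a0 (mu p 0 \<omega>) (mu p 1 \<omega>) (xb 0 p \<omega>) (xb 1 p \<omega>)
  = a0 * Phi ((- Pq0 p \<omega> + cc) / sqrt (Dq p \<omega>)) + (1 - a0) * Phi ((Pq1 p \<omega> - cc) / sqrt (Dq p \<omega>))"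
proof -
  assume a: "0 < n 0 p" "0 < n 1 p"
  have e1: "qf p (Sinv p) (\<lambda>k. xb 0 p \<omega> k - xb 1 p \<omega> k) (\<lambda>k. xb 0 p \<omega> k - xb 1 p \<omega> k) = Dq p \<omega>"
    by (rule qf_cong; rule V_d[OF a]; assumption)
  have e2: "qf p (Sinv p) (\<lambda>k. mu p 0 \<omega> k - (xb 0 p \<omega> k + xb 1 p \<omega> k) / 2) (\<lambda>k. xb 0 p \<omega> k - xb 1 p \<omega> k) = Pq0 p \<omega>"
    by (rule qf_cong, (rule V_P0[OF a], assumption), (rule V_d[OF a], assumption))
  have e3: "qf p (Sinv p) (\<lambda>k. mu p 1 \<omega> k - (xb 0 p \<omega> k + xb 1 p \<omega> k) / 2) (\<lambda>k. xb 0 p \<omega> k - xb 1 p \<omega> k) = Pq1 p \<omega>"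
    by (rule qf_cong, (rule V_P1[OF a], assumption), (rule V_d[OF a], assumption))
  show ?thesis
    unfolding true_err_def true_err_i_def Let_def e1 e2 e3 by simp
qed

abbreviation "sq i p \<equiv> sqrt ((real (n i p) + nu i p) / (real (n i p) + nu i p + 1))"

lemma bee_eq: "0 < n 0 p \<Longrightarrow> 0 < n 1 p \<Longrightarrow>
  bee p (Sinv p) a0 (n 0 p) (n 1 p) (nu 0 p) (nu 1 p) (m 0 p) (m 1 p) (xb 0 p \<omega>) (xb 1 p \<omega>)
  = a0 * Phi ((-1)^0 * ((- Qq0 p \<omega> + cc) / sqrt (Dq p \<omega>)) * sq 0 p) + (1 - a0) * Phi ((-1)^1 * ((- Qq1 p \<omega> + cc) / sqrt (Dq p \<omega>)) * sq 1 p)"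
proof -
  assume a: "0 < n 0 p" "0 < n 1 p"
  have e1: "qf p (Sinv p) (\<lambda>k. xb 0 p \<omega> k - xb 1 p \<omega> k) (\<lambda>k. xb 0 p \<omega> k - xb 1 p \<omega> k) = Dq p \<omega>"
    by (rule qf_cong; rule V_d[OF a]; assumption)
  have e2: "qf p (Sinv p) (\<lambda>k. (real (n 0 p) * xb 0 p \<omega> k + nu 0 p * m 0 p k) / (real (n 0 p) + nu 0 p) - (xb 0 p \<omega> k + xb 1 p \<omega> k) / 2) (\<lambda>k. xb 0 p \<omega> k - xb 1 p \<omega> k) = Qq0 p \<omega>"
    by (rule qf_cong, (rule V_Q0[OF a], assumption), (rule V_d[OF a], assumption))
  have e3: "qf p (Sinv p) (\<lambda>k. (real (n 1 p) * xb 1 p \<omega> k + nu 1 p * m 1 p k) / (real (n 1 p) + nu 1 p) - (xb 0 p \<omega> k + xb 1 p \<omega> k) / 2) (\<lambda>k. xb 0 p \<omega> k - xb 1 p \<omega> k) = Qq1 p \<omega>"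
    by (rule qf_cong, (rule V_Q1[OF a], assumption), (rule V_d[OF a], assumption))
  show ?thesis
    unfolding bee_def bee_i_def Let_def e1 e2 e3 by (rule refl)
qed

end


lemma sqb: "(b - a)^2 \<le> 2*a^2 + 2*(b::real)^2"
proof -
  have "2*a^2 + 2*b^2 - (b - a)^2 = (a + b)^2" by (simp add: power2_eq_square algebra_simps)
  then show ?thesis by (metis diff_ge_0_iff_ge zero_le_power2)
qed

lemma amgm: "\<bar>x*y\<bar> \<le> (x^2 + y^2) / (2::real)"
proof -
  have "(x^2 + y^2) / 2 - \<bar>x*y\<bar> = (\<bar>x\<bar> - \<bar>y\<bar>)^2 / 2"
    by (simp add: power2_eq_square abs_mult algebra_simps abs_mult_self_eq)
  moreover have "0 \<le> (\<bar>x\<bar> - \<bar>y\<bar>)^2 / 2" by simp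
  ultimately show ?thesis by linarith
qed

context prob_space begin

lemma bnd_int: fixes Z :: "'a \<Rightarrow> real" shows "Z \<in> borel_measurable M \<Longrightarrow> (\<And>\<omega>. \<omega> \<in> space M \<Longrightarrow> \<bar>Z \<omega>\<bar> \<le> B) \<Longrightarrow> integrable M Z"
  by (rule integrable_const_bound[where B=B]) (auto intro!: AE_I2)

lemma var_le:
  fixes Z :: "'a \<Rightarrow> real"
  assumes Z: "integrable M Z" "integrable M (\<lambda>\<omega>. (Z \<omega>)^2)"
  shows "variance Z \<le> expectation (\<lambda>\<omega>. (Z \<omega> - s)^2)" "(expectation Z - s)^2 \<le> expectation (\<lambda>\<omega>. (Z \<omega> - s)^2)"
    "0 \<le> variance Z"
proof -
  define u where "u = expectation Z - s"
  have e1: "(\<lambda>\<omega>. (Z \<omega> - s)^2) = (\<lambda>\<omega>. (Z \<omega>)^2 - 2 * s * Z \<omega> + s^2)"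
    by (simp add: power2_eq_square algebra_simps)
  have e2: "(\<lambda>\<omega>. (Z \<omega> - expectation Z)^2) = (\<lambda>\<omega>. (Z \<omega>)^2 - 2 * expectation Z * Z \<omega> + (expectation Z)^2)"
    by (simp add: power2_eq_square algebra_simps)
  have a: "expectation (\<lambda>\<omega>. (Z \<omega> - s)^2) = expectation (\<lambda>\<omega>. (Z \<omega>)^2) - 2 * s * expectation Z + s^2"
    unfolding e1 using Z by (simp add: prob_space)
  have b: "variance Z = expectation (\<lambda>\<omega>. (Z \<omega>)^2) - 2 * expectation Z * expectation Z + (expectation Z)^2"
    unfolding e2 using Z by (simp add: prob_space)
  have v: "variance Z = expectation (\<lambda>\<omega>. (Z \<omega> - s)^2) - (expectation Z - s)^2"
    unfolding a b by (simp add: power2_eq_square algebra_simps)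
  show "0 \<le> variance Z" by (intro integral_nonneg_AE) simp
  then show "variance Z \<le> expectation (\<lambda>\<omega>. (Z \<omega> - s)^2)" "(expectation Z - s)^2 \<le> expectation (\<lambda>\<omega>. (Z \<omega> - s)^2)"
    using v by auto
qed

lemma final_bounds:
  fixes X Y :: "'a \<Rightarrow> real"
  assumes [measurable]: "X \<in> borel_measurable M" "Y \<in> borel_measurable M"
    and bX: "\<And>\<omega>. \<omega> \<in> space M \<Longrightarrow> \<bar>X \<omega> - t\<bar> \<le> 1" and bY: "\<And>\<omega>. \<omega> \<in> space M \<Longrightarrow> \<bar>Y \<omega> - t\<bar> \<le> 1"
  defines "a \<equiv> expectation (\<lambda>\<omega>. (X \<omega> - t)^2)" and "b \<equiv> expectation (\<lambda>\<omega>. (Y \<omega> - t)^2)"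
  shows "norm (variance Y) \<le> b" "norm (variance X) \<le> a"
    "norm (covariance M X Y) \<le> a + b"
    "norm (variance (\<lambda>\<omega>. Y \<omega> - X \<omega>)) \<le> 2 * a + 2 * b"
    "norm (\<bar>expectation (\<lambda>\<omega>. Y \<omega> - X \<omega>)\<bar>) \<le> sqrt (2 * a + 2 * b)"
    "norm (sqrt (expectation (\<lambda>\<omega>. (X \<omega> - Y \<omega>)^2))) \<le> sqrt (2 * a + 2 * b)"
proof -
  have bX': "\<bar>X \<omega>\<bar> \<le> \<bar>t\<bar> + 1" if "\<omega> \<in> space M" for \<omega> using bX[OF that] by linarith
  have bY': "\<bar>Y \<omega>\<bar> \<le> \<bar>t\<bar> + 1" if "\<omega> \<in> space M" for \<omega> using bY[OF that] by linarith
  have iX: "integrable M X" by (rule bnd_int[OF _ bX']) simp_all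
  have iY: "integrable M Y" by (rule bnd_int[OF _ bY']) simp_all
  have sq: "\<bar>z\<bar> \<le> c \<Longrightarrow> \<bar>z^2\<bar> \<le> c^2" for z c :: real
    by (simp add: abs_le_square_iff[symmetric])
  have iX2: "integrable M (\<lambda>\<omega>. (X \<omega>)^2)" by (rule bnd_int[OF _ sq[OF bX']]) simp_all
  have iY2: "integrable M (\<lambda>\<omega>. (Y \<omega>)^2)" by (rule bnd_int[OF _ sq[OF bY']]) simp_all
  have iXt: "integrable M (\<lambda>\<omega>. (X \<omega> - t)^2)" by (rule bnd_int[where B=1]) (use bX in \<open>auto simp: abs_square_le_1\<close>)
  have iYt: "integrable M (\<lambda>\<omega>. (Y \<omega> - t)^2)" by (rule bnd_int[where B=1]) (use bY in \<open>auto simp: abs_square_le_1\<close>)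
  have bD: "\<bar>Y \<omega> - X \<omega>\<bar> \<le> 2" if "\<omega> \<in> space M" for \<omega> using bX[OF that] bY[OF that] by linarith
  have iD: "integrable M (\<lambda>\<omega>. Y \<omega> - X \<omega>)" using iX iY by simp
  have iD2: "integrable M (\<lambda>\<omega>. (Y \<omega> - X \<omega>)^2)" by (rule bnd_int[OF _ sq[OF bD]]) simp_all
  have a0: "0 \<le> a" unfolding a_def by (intro integral_nonneg_AE) simp
  have b0: "0 \<le> b" unfolding b_def by (intro integral_nonneg_AE) simp
  note vX = var_le(1)[OF iX iX2, of t, folded a_def] var_le(2)[OF iX iX2, of t, folded a_def] var_le(3)[OF iX iX2]
  note vY = var_le(1)[OF iY iY2, of t, folded b_def] var_le(2)[OF iY iY2, of t, folded b_def] var_le(3)[OF iY iY2]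
  show "norm (variance Y) \<le> b" "norm (variance X) \<le> a" using vX vY by auto
  have dd: "expectation (\<lambda>\<omega>. (Y \<omega> - X \<omega>)^2) \<le> 2 * a + 2 * b"
  proof -
    have "expectation (\<lambda>\<omega>. (Y \<omega> - X \<omega>)^2) \<le> expectation (\<lambda>\<omega>. 2 * (X \<omega> - t)^2 + 2 * (Y \<omega> - t)^2)"
    proof (rule integral_mono[OF iD2])
      show "integrable M (\<lambda>\<omega>. 2 * (X \<omega> - t)^2 + 2 * (Y \<omega> - t)^2)" using iXt iYt by simp
      fix \<omega> show "(Y \<omega> - X \<omega>)^2 \<le> 2 * (X \<omega> - t)^2 + 2 * (Y \<omega> - t)^2"
        using sqb[of "X \<omega> - t" "Y \<omega> - t"] by (simp add: power2_commute add.commute)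
    qed
    also have "\<dots> = 2 * a + 2 * b" using iXt iYt by (simp add: a_def b_def)
    finally show ?thesis .
  qed
  note vD = var_le(1)[OF iD iD2, of 0] var_le(2)[OF iD iD2, of 0] var_le(3)[OF iD iD2]
  show "norm (variance (\<lambda>\<omega>. Y \<omega> - X \<omega>)) \<le> 2 * a + 2 * b" using vD dd by simp
  have "(expectation (\<lambda>\<omega>. Y \<omega> - X \<omega>))^2 \<le> 2 * a + 2 * b" using vD(2) dd by simp
  then show "norm (\<bar>expectation (\<lambda>\<omega>. Y \<omega> - X \<omega>)\<bar>) \<le> sqrt (2 * a + 2 * b)"
    by (simp add: real_le_rsqrt)
  have "(\<lambda>\<omega>. (X \<omega> - Y \<omega>)^2) = (\<lambda>\<omega>. (Y \<omega> - X \<omega>)^2)" by (simp add: power2_commute)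
  then show "norm (sqrt (expectation (\<lambda>\<omega>. (X \<omega> - Y \<omega>)^2))) \<le> sqrt (2 * a + 2 * b)"
    using dd by (simp add: integral_nonneg_AE)
  define u where "u = expectation X - t"
  define v where "v = expectation Y - t"
  have ixy: "integrable M (\<lambda>\<omega>. (X \<omega> - t) * (Y \<omega> - t))"
    by (rule bnd_int[where B=1]) (use bX bY in \<open>auto simp: abs_mult intro: mult_le_one\<close>)
  have cov: "covariance M X Y = expectation (\<lambda>\<omega>. (X \<omega> - t) * (Y \<omega> - t)) - u * v"
  proof -
    have e: "(\<lambda>\<omega>. (X \<omega> - expectation X) * (Y \<omega> - expectation Y)) = (\<lambda>\<omega>. (X \<omega> - t) * (Y \<omega> - t) - v * (X \<omega> - t) - u * (Y \<omega> - t) + u * v)"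
      by (rule ext) (simp add: u_def v_def algebra_simps)
    have iXt1: "integrable M (\<lambda>\<omega>. X \<omega> - t)" using iX by simp
    have iYt1: "integrable M (\<lambda>\<omega>. Y \<omega> - t)" using iY by simp
    have EX: "expectation (\<lambda>\<omega>. X \<omega> - t) = u" using iX by (simp add: u_def prob_space)
    have EY: "expectation (\<lambda>\<omega>. Y \<omega> - t) = v" using iY by (simp add: v_def prob_space)
    have "covariance M X Y = expectation (\<lambda>\<omega>. (X \<omega> - t) * (Y \<omega> - t) - v * (X \<omega> - t) - u * (Y \<omega> - t)) + u * v"
      unfolding covariance_def e
      by (subst Bochner_Integration.integral_add) (use ixy iXt1 iYt1 in \<open>auto simp: prob_space\<close>)
    also have "\<dots> = expectation (\<lambda>\<omega>. (X \<omega> - t) * (Y \<omega> - t)) - v * u - u * v + u * v"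
      by (subst Bochner_Integration.integral_diff, use ixy iXt1 iYt1 in simp, use ixy iXt1 iYt1 in simp,
          subst Bochner_Integration.integral_diff, use ixy iXt1 iYt1 in simp, use ixy iXt1 iYt1 in simp)
         (simp add: EX EY)
    finally show ?thesis by simp
  qed
  have c1: "\<bar>expectation (\<lambda>\<omega>. (X \<omega> - t) * (Y \<omega> - t))\<bar> \<le> (a + b) / 2"
  proof -
    have "\<bar>expectation (\<lambda>\<omega>. (X \<omega> - t) * (Y \<omega> - t))\<bar> \<le> expectation (\<lambda>\<omega>. \<bar>(X \<omega> - t) * (Y \<omega> - t)\<bar>)"
      by (rule integral_abs_bound)
    also have "\<dots> \<le> expectation (\<lambda>\<omega>. ((X \<omega> - t)^2 + (Y \<omega> - t)^2) / 2)"
    proof (rule integral_mono)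
      show "integrable M (\<lambda>\<omega>. \<bar>(X \<omega> - t) * (Y \<omega> - t)\<bar>)" using ixy by simp
      show "integrable M (\<lambda>\<omega>. ((X \<omega> - t)^2 + (Y \<omega> - t)^2) / 2)" using iXt iYt by simp
      fix \<omega> show "\<bar>(X \<omega> - t) * (Y \<omega> - t)\<bar> \<le> ((X \<omega> - t)^2 + (Y \<omega> - t)^2) / 2"
        by (rule amgm)
    qed
    also have "\<dots> = (a + b) / 2" using iXt iYt by (simp add: a_def b_def)
    finally show ?thesis .
  qed
  have c2: "\<bar>u * v\<bar> \<le> (a + b) / 2"
  proof -
    have "\<bar>u * v\<bar> \<le> (u^2 + v^2) / 2"
      by (rule amgm)
    also have "\<dots> \<le> (a + b) / 2" using vX(2) vY(2) by (simp add: u_def v_def)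
    finally show ?thesis .
  qed
  show "norm (covariance M X Y) \<le> a + b" unfolding cov using c1 c2 by simp
qed

end

context model begin

lemma sq_lim: "i < 2 \<Longrightarrow> (\<lambda>p. sq i p) \<longlonglongrightarrow> 1"
proof -
  assume i: "i < 2"
  define w where "w = (\<lambda>p. real (n i p) + nu i p)"
  have wpos: "w p > 0" for p using nu_pos[OF i, of p] by (simp add: w_def add_nonneg_pos)
  have winf: "filterlim w at_top sequentially"
    unfolding w_def by (rule filterlim_at_top_add_at_top[OF n_real_inf[OF i] nu_inf[OF i]])
  have w1: "filterlim (\<lambda>p. w p + 1) at_top sequentially"
    using filterlim_tendsto_add_at_top[OF tendsto_const winf, of 1] by (simp add: add.commute)
  have "(\<lambda>p. 1 - 1 / (w p + 1)) \<longlonglongrightarrow> 1 - 0"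
    by (intro tendsto_diff tendsto_const inv_lim[OF w1])
  moreover have "(\<lambda>p. 1 - 1 / (w p + 1)) = (\<lambda>p. w p / (w p + 1))"
  proof
    fix p have "w p + 1 \<noteq> 0" using wpos[of p] by simp
    then show "1 - 1 / (w p + 1) = w p / (w p + 1)" by (simp add: field_simps)
  qed
  ultimately have "(\<lambda>p. w p / (w p + 1)) \<longlonglongrightarrow> 1" by simp
  from tendsto_real_sqrt[OF this] show ?thesis by (simp add: w_def)
qed

abbreviation "TT \<equiv> a0 * Phi ((- (FF / 2 - J 0) + cc) / sqrt FF) + (1 - a0) * Phi (((- FF / 2 + J 1) - cc) / sqrt FF)"

lemma FF_pos: "FF > 0" using F_pos by simp

lemma cip_epsF: "cip M (\<lambda>p \<omega>. a0 * Phi ((- Pq0 p \<omega> + cc) / sqrt (Dq p \<omega>)) + (1 - a0) * Phi ((Pq1 p \<omega> - cc) / sqrt (Dq p \<omega>))) TT"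
proof -
  have sD: "cip M (\<lambda>p \<omega>. sqrt (Dq p \<omega>)) (sqrt FF)" by (rule cip_sqrt[OF cip_D])
  have nz: "sqrt FF \<noteq> 0" using FF_pos by simp
  have cc: "cip M (\<lambda>p \<omega>. cc) cc" using cip_const[of "\<lambda>p. cc" cc] by simp
  have ca: "cip M (\<lambda>p \<omega>. a0) a0" using cip_const[of "\<lambda>p. a0" a0] by simp
  have ca1: "cip M (\<lambda>p \<omega>. 1 - a0) (1 - a0)" using cip_const[of "\<lambda>p. 1 - a0" "1 - a0"] by simp
  have A0: "cip M (\<lambda>p \<omega>. (- Pq0 p \<omega> + cc) / sqrt (Dq p \<omega>)) ((- (FF / 2 - J 0) + cc) / sqrt FF)"
    by (rule cip_divide[OF cip_add[OF cip_minus[OF cip_P0] cc] sD nz])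
  have A1: "cip M (\<lambda>p \<omega>. (Pq1 p \<omega> - cc) / sqrt (Dq p \<omega>)) (((- FF / 2 + J 1) - cc) / sqrt FF)"
    by (rule cip_divide[OF cip_diff[OF cip_P1 cc] sD nz])
  show ?thesis
    by (rule cip_add[OF cip_mult[OF ca cip_comp1[OF A0 Phi_cont]] cip_mult[OF ca1 cip_comp1[OF A1 Phi_cont]]])
qed

lemma cip_beeF: "cip M (\<lambda>p \<omega>. a0 * Phi ((-1)^0 * ((- Qq0 p \<omega> + cc) / sqrt (Dq p \<omega>)) * sq 0 p)
   + (1 - a0) * Phi ((-1)^1 * ((- Qq1 p \<omega> + cc) / sqrt (Dq p \<omega>)) * sq 1 p)) TT"
proof -
  have sD: "cip M (\<lambda>p \<omega>. sqrt (Dq p \<omega>)) (sqrt FF)" by (rule cip_sqrt[OF cip_D])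
  have nz: "sqrt FF \<noteq> 0" using FF_pos by simp
  have cc: "cip M (\<lambda>p \<omega>. cc) cc" using cip_const[of "\<lambda>p. cc" cc] by simp
  have ca: "cip M (\<lambda>p \<omega>. a0) a0" using cip_const[of "\<lambda>p. a0" a0] by simp
  have ca1: "cip M (\<lambda>p \<omega>. 1 - a0) (1 - a0)" using cip_const[of "\<lambda>p. 1 - a0" "1 - a0"] by simp
  have s0: "cip M (\<lambda>p \<omega>. (-1::real)^0) ((-1)^0)" using cip_const[of "\<lambda>p. (-1::real)^0"] by simp
  have s1: "cip M (\<lambda>p \<omega>. (-1::real)^1) ((-1)^1)" using cip_const[of "\<lambda>p. (-1::real)^1"] by simp
  have q0: "cip M (\<lambda>p \<omega>. sq 0 p) 1" by (rule cip_const[OF sq_lim]) simp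
  have q1: "cip M (\<lambda>p \<omega>. sq 1 p) 1" by (rule cip_const[OF sq_lim]) simp
  have A0: "cip M (\<lambda>p \<omega>. (- Qq0 p \<omega> + cc) / sqrt (Dq p \<omega>)) ((- (FF / 2 - J 0) + cc) / sqrt FF)"
    by (rule cip_divide[OF cip_add[OF cip_minus[OF cip_Q0] cc] sD nz])
  have A1: "cip M (\<lambda>p \<omega>. (- Qq1 p \<omega> + cc) / sqrt (Dq p \<omega>)) ((- (- FF / 2 + J 1) + cc) / sqrt FF)"
    by (rule cip_divide[OF cip_add[OF cip_minus[OF cip_Q1] cc] sD nz])
  note B0 = cip_mult[OF cip_mult[OF s0 A0] q0]
  note B1 = cip_mult[OF cip_mult[OF s1 A1] q1]
  have H: "cip M (\<lambda>p \<omega>. a0 * Phi ((-1)^0 * ((- Qq0 p \<omega> + cc) / sqrt (Dq p \<omega>)) * sq 0 p)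
   + (1 - a0) * Phi ((-1)^1 * ((- Qq1 p \<omega> + cc) / sqrt (Dq p \<omega>)) * sq 1 p))
    (a0 * Phi ((-1)^0 * ((- (FF / 2 - J 0) + cc) / sqrt FF) * 1) + (1 - a0) * Phi ((-1)^1 * ((- (- FF / 2 + J 1) + cc) / sqrt FF) * 1))"
    by (rule cip_add[OF cip_mult[OF ca cip_comp1[OF B0 Phi_cont]] cip_mult[OF ca1 cip_comp1[OF B1 Phi_cont]]])
  have e: "(-1::real)^1 * ((- (- FF / 2 + J 1) + cc) / sqrt FF) = ((- FF / 2 + J 1) - cc) / sqrt FF"
    by (simp add: field_simps)
  show ?thesis
    by (rule cip_cong[OF H]) (simp, simp only: power_0 mult_1 mult_1_right e)
qed

end


context model begin

lemma xb_comp: "i < 2 \<Longrightarrow> k < p \<Longrightarrow> (\<lambda>\<omega>. xb i p \<omega> k) \<in> borel_measurable (M p)"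
  unfolding smean_def by (intro borel_measurable_divide borel_measurable_sum measurable_const X_comp) auto

abbreviation "Epf p \<equiv> (\<lambda>\<omega>. true_err p (Sinv p) a0 (mu p 0 \<omega>) (mu p 1 \<omega>) (smean (n 0 p) (\<lambda>j. X p 0 j \<omega>)) (smean (n 1 p) (\<lambda>j. X p 1 j \<omega>)))"
abbreviation "Bef p \<equiv> (\<lambda>\<omega>. bee p (Sinv p) a0 (n 0 p) (n 1 p) (nu 0 p) (nu 1 p) (m 0 p) (m 1 p) (smean (n 0 p) (\<lambda>j. X p 0 j \<omega>)) (smean (n 1 p) (\<lambda>j. X p 1 j \<omega>)))"

lemma sqrt_comp: "f \<in> borel_measurable N \<Longrightarrow> (\<lambda>x. sqrt (f x)) \<in> borel_measurable N"
  by (rule measurable_compose[OF _ borel_measurable_sqrt])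
lemma Phi_comp: "f \<in> borel_measurable N \<Longrightarrow> (\<lambda>x. Phi (f x)) \<in> borel_measurable N"
  by (rule measurable_compose[OF _ Phi_meas])

lemma Eps_meas: "Epf p \<in> borel_measurable (M p)"
  unfolding true_err_def true_err_i_def Let_def
  by (intro borel_measurable_add borel_measurable_times measurable_const Phi_comp borel_measurable_divide
        sqrt_comp qf_meas borel_measurable_diff xb_comp mu_comp) auto

lemma Bee_meas: "Bef p \<in> borel_measurable (M p)"
  unfolding bee_def bee_i_def Let_def
  by (intro borel_measurable_add borel_measurable_times measurable_const Phi_comp borel_measurable_divide
        sqrt_comp qf_meas borel_measurable_diff xb_comp mu_comp borel_measurable_uminus) auto

lemma convex01: "0 \<le> x \<Longrightarrow> x \<le> 1 \<Longrightarrow> 0 \<le> y \<Longrightarrow> y \<le> 1 \<Longrightarrow> 0 \<le> a0 * x + (1 - a0) * y \<and> a0 * x + (1 - a0) * y \<le> (1::real)"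
proof -
  assume xy: "0 \<le> x" "x \<le> 1" "0 \<le> y" "y \<le> 1"
  have "a0 * x \<le> a0" "(1 - a0) * y \<le> 1 - a0" using a0 xy by (auto intro: mult_left_le)
  moreover have "0 \<le> a0 * x" "0 \<le> (1 - a0) * y" using a0 xy by auto
  ultimately show ?thesis by linarith
qed

lemma TT_01: "0 \<le> TT \<and> TT \<le> 1" by (rule convex01) (simp_all add: Phi_bounds)
lemma Eps_01: "0 \<le> Epf p \<omega> \<and> Epf p \<omega> \<le> 1"
  unfolding true_err_def Let_def by (rule convex01) (simp_all add: true_err_i_def Phi_bounds)
lemma Bee_01: "0 \<le> Bef p \<omega> \<and> Bef p \<omega> \<le> 1"
  unfolding bee_def Let_def by (rule convex01) (simp_all add: bee_i_def Let_def Phi_bounds)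

lemma Eps_bnd: "\<bar>Epf p \<omega> - TT\<bar> \<le> 1" using Eps_01[of p \<omega>] TT_01 by linarith
lemma Bee_bnd: "\<bar>Bef p \<omega> - TT\<bar> \<le> 1" using Bee_01[of p \<omega>] TT_01 by linarith

lemma n01_ev: "\<forall>\<^sub>F p in sequentially. 0 < n 0 p \<and> 0 < n 1 p"
  using eventually_conj[OF n_pos_ev[of 0] n_pos_ev[of 1]] by simp

lemma cip_Eps: "cip M Epf TT"
  apply (rule cip_cong[OF cip_epsF])
   apply (rule eventually_mono[OF n01_ev])
   apply (intro ballI)
   apply (rule eps_eq[symmetric]; elim conjE; assumption)
  apply (rule refl)
  done
lemma cip_Bee: "cip M Bef TT"
  apply (rule cip_cong[OF cip_beeF])
   apply (rule eventually_mono[OF n01_ev])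
   apply (intro ballI)
   apply (rule bee_eq[symmetric]; elim conjE; assumption)
  apply (rule refl)
  done

lemma L2_Eps: "(\<lambda>p. integral\<^sup>L (M p) (\<lambda>\<omega>. (Epf p \<omega> - TT)^2)) \<longlonglongrightarrow> 0"
  by (rule cip_bounded_L2[OF Eps_meas Eps_bnd cip_Eps])
lemma L2_Bee: "(\<lambda>p. integral\<^sup>L (M p) (\<lambda>\<omega>. (Bef p \<omega> - TT)^2)) \<longlonglongrightarrow> 0"
  by (rule cip_bounded_L2[OF Bee_meas Bee_bnd cip_Bee])

theorem main:
  "((\<lambda>p. prob_space.variance (M p) (Bef p)) \<longlonglongrightarrow> 0)
     \<and> ((\<lambda>p. prob_space.variance (M p) (Epf p)) \<longlonglongrightarrow> 0)
     \<and> ((\<lambda>p. covariance (M p) (Epf p) (Bef p)) \<longlonglongrightarrow> 0)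
     \<and> ((\<lambda>p. prob_space.variance (M p) (\<lambda>\<omega>. Bef p \<omega> - Epf p \<omega>)) \<longlonglongrightarrow> 0)
     \<and> ((\<lambda>p. \<bar>prob_space.expectation (M p) (\<lambda>\<omega>. Bef p \<omega> - Epf p \<omega>)\<bar>) \<longlonglongrightarrow> 0)
     \<and> ((\<lambda>p. sqrt (prob_space.expectation (M p) (\<lambda>\<omega>. (Epf p \<omega> - Bef p \<omega>)\<^sup>2))) \<longlonglongrightarrow> 0)"
proof -
  define a where "a = (\<lambda>p. integral\<^sup>L (M p) (\<lambda>\<omega>. (Epf p \<omega> - TT)^2))"
  define b where "b = (\<lambda>p. integral\<^sup>L (M p) (\<lambda>\<omega>. (Bef p \<omega> - TT)^2))"
  have a: "a \<longlonglongrightarrow> 0" unfolding a_def by (rule L2_Eps)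
  have b: "b \<longlonglongrightarrow> 0" unfolding b_def by (rule L2_Bee)
  have ab: "(\<lambda>p. a p + b p) \<longlonglongrightarrow> 0" using tendsto_add[OF a b] by simp
  have ab2: "(\<lambda>p. 2 * a p + 2 * b p) \<longlonglongrightarrow> 0" using tendsto_add[OF tendsto_mult[OF tendsto_const a, of 2] tendsto_mult[OF tendsto_const b, of 2]] by simp
  have abs: "(\<lambda>p. sqrt (2 * a p + 2 * b p)) \<longlonglongrightarrow> 0" using tendsto_real_sqrt[OF ab2] by simp
  have fb: "norm (prob_space.variance (M p) (Bef p)) \<le> b p \<and> norm (prob_space.variance (M p) (Epf p)) \<le> a p
     \<and> norm (covariance (M p) (Epf p) (Bef p)) \<le> a p + b p
     \<and> norm (prob_space.variance (M p) (\<lambda>\<omega>. Bef p \<omega> - Epf p \<omega>)) \<le> 2 * a p + 2 * b p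
     \<and> norm (\<bar>prob_space.expectation (M p) (\<lambda>\<omega>. Bef p \<omega> - Epf p \<omega>)\<bar>) \<le> sqrt (2 * a p + 2 * b p)
     \<and> norm (sqrt (prob_space.expectation (M p) (\<lambda>\<omega>. (Epf p \<omega> - Bef p \<omega>)\<^sup>2))) \<le> sqrt (2 * a p + 2 * b p)" for p
    using prob_space.final_bounds[OF prob Eps_meas Bee_meas Eps_bnd Bee_bnd]
    unfolding a_def b_def by blast
  have 1: "(\<lambda>p. prob_space.variance (M p) (Bef p)) \<longlonglongrightarrow> 0"
    by (rule Lim_null_comparison[where g=b, OF _ b]) (intro always_eventually allI, use fb in blast)
  have 2: "(\<lambda>p. prob_space.variance (M p) (Epf p)) \<longlonglongrightarrow> 0"
    by (rule Lim_null_comparison[where g=a, OF _ a]) (intro always_eventually allI, use fb in blast)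
  have 3: "(\<lambda>p. covariance (M p) (Epf p) (Bef p)) \<longlonglongrightarrow> 0"
    by (rule Lim_null_comparison[where g="\<lambda>p. a p + b p", OF _ ab]) (intro always_eventually allI, use fb in blast)
  have 4: "(\<lambda>p. prob_space.variance (M p) (\<lambda>\<omega>. Bef p \<omega> - Epf p \<omega>)) \<longlonglongrightarrow> 0"
    by (rule Lim_null_comparison[where g="\<lambda>p. 2 * a p + 2 * b p", OF _ ab2]) (intro always_eventually allI, use fb in blast)
  have 5: "(\<lambda>p. \<bar>prob_space.expectation (M p) (\<lambda>\<omega>. Bef p \<omega> - Epf p \<omega>)\<bar>) \<longlonglongrightarrow> 0"
    by (rule Lim_null_comparison[where g="\<lambda>p. sqrt (2 * a p + 2 * b p)", OF _ abs]) (intro always_eventually allI, use fb in blast)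
  have 6: "(\<lambda>p. sqrt (prob_space.expectation (M p) (\<lambda>\<omega>. (Epf p \<omega> - Bef p \<omega>)\<^sup>2))) \<longlonglongrightarrow> 0"
    by (rule Lim_null_comparison[where g="\<lambda>p. sqrt (2 * a p + 2 * b p)", OF _ abs]) (intro always_eventually allI, use fb in blast)
  show ?thesis using 1 2 3 4 5 6 by blast
qed

end


theorem mainTheorem7:
  fixes a0 :: real
    and M :: "nat \<Rightarrow> 'a measure"
    and Sig Sinv :: "nat \<Rightarrow> nat \<Rightarrow> nat \<Rightarrow> real"
    and n :: "nat \<Rightarrow> nat \<Rightarrow> nat"
    and nu :: "nat \<Rightarrow> nat \<Rightarrow> real"
    and m :: "nat \<Rightarrow> nat \<Rightarrow> nat \<Rightarrow> real"
    and mu :: "nat \<Rightarrow> nat \<Rightarrow> 'a \<Rightarrow> nat \<Rightarrow> real"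
    and X :: "nat \<Rightarrow> nat \<Rightarrow> nat \<Rightarrow> 'a \<Rightarrow> nat \<Rightarrow> real"
    and J gam :: "nat \<Rightarrow> real"
    and Dbar2 :: real
  assumes a0: "0 < a0" "a0 < 1"
    and Sig_sym: "\<And>p k l. k < p \<Longrightarrow> l < p \<Longrightarrow> Sig p k l = Sig p l k"
    and Sig_pd: "\<And>p x. (\<exists>k<p. x k \<noteq> 0) \<Longrightarrow> qf p (Sig p) x x > 0"
    and Sinv_r: "\<And>p k l. k < p \<Longrightarrow> l < p \<Longrightarrow>
                   (\<Sum>j<p. Sig p k j * Sinv p j l) = (if k = l then 1 else 0)"
    and Sinv_l: "\<And>p k l. k < p \<Longrightarrow> l < p \<Longrightarrow>
                   (\<Sum>j<p. Sinv p k j * Sig p j l) = (if k = l then 1 else 0)"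
    and nu_pos: "\<And>i p. i < 2 \<Longrightarrow> nu i p > 0"
    and prob: "\<And>p. prob_space (M p)"
    and mu_law: "\<And>i p. i < 2 \<Longrightarrow>
                   mvn (M p) p (mu p i) (m i p) (\<lambda>k l. Sig p k l / nu i p)"
    and noise_law: "\<And>i j p. i < 2 \<Longrightarrow> j < n i p \<Longrightarrow>
                   mvn (M p) p (\<lambda>\<omega>. restrict (\<lambda>k. X p i j \<omega> k - mu p i \<omega> k) {..<p}) (\<lambda>_. 0) (Sig p)"
    and indep: "\<And>p. prob_space.indep_vars (M p) (\<lambda>_. PiM {..<p} (\<lambda>_. borel))
                   (\<lambda>r \<omega>. case r of MuI i \<Rightarrow> mu p i \<omega>
                     | NoiseI i j \<Rightarrow> restrict (\<lambda>k. X p i j \<omega> k - mu p i \<omega> k) {..<p})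
                   ({MuI 0, MuI 1} \<union> {NoiseI i j | i j. i < 2 \<and> j < n i p})"
    and n_inf: "\<And>i. i < 2 \<Longrightarrow> filterlim (\<lambda>p. n i p) at_top sequentially"
    and nu_inf: "\<And>i. i < 2 \<Longrightarrow> filterlim (\<lambda>p. nu i p) at_top sequentially"
    and J_lim: "\<And>i. i < 2 \<Longrightarrow> (\<lambda>p. real p / real (n i p)) \<longlonglongrightarrow> J i"
    and J_nonneg: "\<And>i. i < 2 \<Longrightarrow> 0 \<le> J i"
    and gam_lim: "\<And>i. i < 2 \<Longrightarrow> (\<lambda>p. nu i p / real (n i p)) \<longlonglongrightarrow> gam i"
    and gam_pos: "\<And>i. i < 2 \<Longrightarrow> 0 < gam i"
    and m_conv: "\<And>i j. i < 2 \<Longrightarrow> j < 2 \<Longrightarrow> convergent (\<lambda>p. qf p (Sinv p) (m i p) (m j p))"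
    and Dbar: "(\<lambda>p. qf p (Sinv p) (\<lambda>k. m 0 p k - m 1 p k) (\<lambda>k. m 0 p k - m 1 p k)) \<longlonglongrightarrow> Dbar2"
    and F_pos: "Dbar2 + J 0 + J 1 + J 0 / gam 0 + J 1 / gam 1 > 0"
  defines "eps \<equiv> \<lambda>p \<omega>. true_err p (Sinv p) a0 (mu p 0 \<omega>) (mu p 1 \<omega>)
                      (smean (n 0 p) (\<lambda>j. X p 0 j \<omega>)) (smean (n 1 p) (\<lambda>j. X p 1 j \<omega>))"
    and "epsB \<equiv> \<lambda>p \<omega>. bee p (Sinv p) a0 (n 0 p) (n 1 p) (nu 0 p) (nu 1 p) (m 0 p) (m 1 p)
                      (smean (n 0 p) (\<lambda>j. X p 0 j \<omega>)) (smean (n 1 p) (\<lambda>j. X p 1 j \<omega>))"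
  shows "((\<lambda>p. prob_space.variance (M p) (epsB p)) \<longlonglongrightarrow> 0)
     \<and> ((\<lambda>p. prob_space.variance (M p) (eps p)) \<longlonglongrightarrow> 0)
     \<and> ((\<lambda>p. covariance (M p) (eps p) (epsB p)) \<longlonglongrightarrow> 0)
     \<and> ((\<lambda>p. prob_space.variance (M p) (\<lambda>\<omega>. epsB p \<omega> - eps p \<omega>)) \<longlonglongrightarrow> 0)
     \<and> ((\<lambda>p. \<bar>prob_space.expectation (M p) (\<lambda>\<omega>. epsB p \<omega> - eps p \<omega>)\<bar>) \<longlonglongrightarrow> 0)
     \<and> ((\<lambda>p. sqrt (prob_space.expectation (M p) (\<lambda>\<omega>. (eps p \<omega> - epsB p \<omega>)\<^sup>2))) \<longlonglongrightarrow> 0)"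
proof -
  interpret model a0 M Sig Sinv n nu m mu X J gam Dbar2
    by (rule model.intro) (fact assms)+
  show ?thesis unfolding eps_def epsB_def by (rule main)
qed

end
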